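(* Let $\zeta_5=e^{2\pi i/5}$ and write $c_k=\theta[\tfrac15;\tfrac k5]$, $d_k=\theta[\tfrac35;\tfrac k5]$ for $k\in\{1,3,5,7,9\}$ (theta constants, functions of $\tau$). For every $\tau\in\mathbb{H}^2$, $$\theta[1;\tfrac15]=\zeta_5\,\frac{\zeta_5c_9^3d_5+c_3^3d_1}{d_3^3},\qquad \theta[1;\tfrac35]=\frac{-d_7^3c_5+d_9^3c_7}{c_1^3}.$$
   Context: Let $\mathbb{H}^2=\{\tau\in\mathbb{C}:\Im\tau>0\}$. For $(\epsilon,\epsilon')\in\mathbb{R}^2$, $$\theta[\epsilon;\epsilon'](\zeta,\tau)=\sum_{n\in\mathbb{Z}}\exp\Big(2\pi i\Big[\tfrac12\big(n+\tfrac{\epsilon}{2}\big)^2\tau+\big(n+\tfrac{\epsilon}{2}\big)\big(\zeta+\tfrac{\epsilon'}{2}\big)\Big]\Big),$$ and $\theta[\epsilon;\epsilon']=\theta[\epsilon;\epsilon'](0,\tau)$ denotes the theta constant. *)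

theory Defs
  imports "HOL-Analysis.Analysis"
begin

definition theta_char :: "real \<Rightarrow> real \<Rightarrow> complex \<Rightarrow> complex \<Rightarrow> complex" where
  "theta_char e e' z tau =
     (\<Sum>\<^sub>\<infinity> n::int. exp (2 * pi * \<i> *
        ((1/2) * (of_int n + of_real (e/2))^2 * tau
         + (of_int n + of_real (e/2)) * (z + of_real (e'/2)))))"

definition theta_const :: "real \<Rightarrow> real \<Rightarrow> complex \<Rightarrow> complex" where
  "theta_const e e' tau = theta_char e e' 0 tau"

end

theory Submission
  imports Defs
begin

lemma int_split_UNIV: "(UNIV::int set) = range int \<union> range (\<lambda>n. - int n - 1)"
proof -
  have "x \<in> range int \<union> range (\<lambda>n. - int n - 1)" for x :: int
  proof (cases "x \<ge> 0")
    case True thus ?thesis by (metis UnI1 nonneg_int_cases rangeI)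
  next
    case False thus ?thesis
      by (auto intro!: UnI2 image_eqI[where x="nat (-x-1)"])
  qed
  thus ?thesis by auto
qed

lemma int_split_disj: "range int \<inter> range (\<lambda>n. - int n - 1) = {}"
  by auto

lemma int_has_sum_split:
  fixes f :: "int \<Rightarrow> 'a::banach"
  assumes "summable (\<lambda>n. norm (f (int n)))" "summable (\<lambda>n. norm (f (- int n - 1)))"
  shows "(f has_sum ((\<Sum>n. f (int n)) + (\<Sum>n. f (- int n - 1)))) UNIV"
proof -
  have s1: "((\<lambda>n. f (int n)) has_sum (\<Sum>n. f (int n))) UNIV"
    by (rule norm_summable_imp_has_sum[OF assms(1) summable_sums[OF summable_norm_cancel[OF assms(1)]]])
  have s2: "((\<lambda>n. f (- int n - 1)) has_sum (\<Sum>n. f (- int n - 1))) UNIV"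
    by (rule norm_summable_imp_has_sum[OF assms(2) summable_sums[OF summable_norm_cancel[OF assms(2)]]])
  have i1: "inj (int)" by (auto intro: injI)
  have i2: "inj (\<lambda>n::nat. - int n - 1)" by (auto intro: injI)
  have h1: "(f has_sum (\<Sum>n. f (int n))) (range int)"
    using has_sum_reindex[OF i1, of f] s1 by (simp add: o_def)
  have h2: "(f has_sum (\<Sum>n. f (- int n - 1))) (range (\<lambda>n. - int n - 1))"
    using has_sum_reindex[OF i2, of f] s2 by (simp add: o_def)
  show ?thesis
    using has_sum_Un_disjoint[OF h1 h2 int_split_disj] int_split_UNIV by simp
qed

lemma int_summable_split:
  fixes f :: "int \<Rightarrow> 'a::banach"
  assumes "summable (\<lambda>n. norm (f (int n)))" "summable (\<lambda>n. norm (f (- int n - 1)))"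
  shows "f summable_on UNIV"
  using int_has_sum_split[OF assms] by (auto simp: summable_on_def)

definition tm :: "complex \<Rightarrow> real \<Rightarrow> real \<Rightarrow> int \<Rightarrow> complex" where
  "tm t a b n = exp (2 * pi * \<i> * ((1/2) * (of_int n + of_real a)^2 * t + (of_int n + of_real a) * of_real b))"

lemma theta_const_tm: "theta_const e e' t = (\<Sum>\<^sub>\<infinity>n. tm t (e/2) (e'/2) n)"
  unfolding theta_const_def theta_char_def tm_def by simp

lemma norm_tm: "norm (tm t a b n) = exp (- pi * Im t * (of_int n + a)^2)"
proof -
  have "Re (2 * pi * \<i> * ((1/2) * (of_int n + of_real a)^2 * t + (of_int n + of_real a) * of_real b))
        = - pi * Im t * (of_int n + a)^2"
  proof -
    have e1: "(of_int n + of_real a :: complex) = of_real (of_int n + a)" by simp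
    show ?thesis unfolding e1 by (simp add: power2_eq_square algebra_simps)
  qed
  thus ?thesis unfolding tm_def norm_exp_eq_Re by simp
qed

lemma sq_lower: fixes x a :: real shows "(x + a)^2 \<ge> x^2 / 2 - a^2"
proof -
  have "(x+a)^2 - (x^2/2 - a^2) = (x + 2*a)^2/2" by (simp add: power2_eq_square field_simps)
  moreover have "(x + 2*a)^2/2 \<ge> 0" by simp
  ultimately show ?thesis by linarith
qed

lemma int_abs_le_sq: fixes n :: int shows "real_of_int \<bar>n\<bar> \<le> (of_int n)^2"
proof -
  have "\<bar>n\<bar> \<le> \<bar>n\<bar> * \<bar>n\<bar>"
  proof (cases "n = 0")
    case False hence "1 \<le> \<bar>n\<bar>" by linarith
    thus ?thesis by (metis abs_ge_zero mult_le_cancel_left1 not_le mult.commute less_le_trans zero_less_one mult_right_mono mult_1 order.refl)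
  qed simp
  hence "\<bar>n\<bar> \<le> n^2" by (simp add: power2_eq_square abs_mult[symmetric])
  thus ?thesis by (metis of_int_le_iff of_int_power)
qed

lemma gauss_bound:
  fixes c a :: real and n :: int
  assumes "c > 0"
  shows "exp (- c * (of_int n + a)^2) \<le> exp (c * a^2) * exp (- c/2) ^ nat \<bar>n\<bar>"
proof -
  have h1: "(of_int n + a)^2 \<ge> (of_int n)^2 / 2 - a^2" by (rule sq_lower)
  have h2: "real (nat \<bar>n\<bar>) \<le> (of_int n)^2" using int_abs_le_sq[of n] by simp
  have "(of_int n + a)^2 \<ge> real (nat \<bar>n\<bar>) / 2 - a^2" using h1 h2 by linarith
  hence "c * (of_int n + a)^2 \<ge> c * (real (nat \<bar>n\<bar>) / 2 - a^2)"
    using assms by (intro mult_left_mono) auto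
  hence "- c * (of_int n + a)^2 \<le> c * a^2 + (- c/2) * real (nat \<bar>n\<bar>)"
    by (simp add: algebra_simps)
  hence "exp (- c * (of_int n + a)^2) \<le> exp (c * a^2 + (- c/2) * real (nat \<bar>n\<bar>))" by simp
  also have "\<dots> = exp (c * a^2) * exp (real (nat \<bar>n\<bar>) * (- c/2))"
    by (simp only: exp_add mult.commute[of "- c/2"])
  also have "\<dots> = exp (c * a^2) * exp (- c/2) ^ nat \<bar>n\<bar>"
    by (simp only: exp_of_nat_mult)
  finally show ?thesis .
qed

lemma geom_summable_aux:
  fixes r :: real assumes "0 \<le> r" "r < 1"
  shows "summable (\<lambda>n::nat. K * r ^ n)"
  using assms by (intro summable_mult summable_geometric) auto

lemma gauss_summable:
  fixes c a :: real assumes "c > 0"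
  shows "summable (\<lambda>n::nat. exp (- c * (of_int (int n) + a)^2))"
    and "summable (\<lambda>n::nat. exp (- c * (of_int (- int n - 1) + a)^2))"
proof -
  have r: "0 \<le> exp (- c/2)" "exp (- c/2) < 1" using assms by auto
  show "summable (\<lambda>n::nat. exp (- c * (of_int (int n) + a)^2))"
    by (rule summable_comparison_test'[OF geom_summable_aux[OF r, of "exp (c*a^2)"]])
       (use gauss_bound[OF assms, of "int _" a] in auto)
  show "summable (\<lambda>n::nat. exp (- c * (of_int (- int n - 1) + a)^2))"
  proof (rule summable_comparison_test'[OF summable_ignore_initial_segment[OF geom_summable_aux[OF r, of "exp (c*a^2)"], of 1]])
    fix n :: nat
    show "norm (exp (- c * (of_int (- int n - 1) + a)^2)) \<le> exp (c*a^2) * exp (- c/2) ^ (n + 1)"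
      using gauss_bound[OF assms, of "- int n - 1" a] by (simp add: nat_add_distrib)
  qed
qed

lemma tm_summable_parts:
  assumes "Im t > 0"
  shows "summable (\<lambda>n. norm (tm t a b (int n)))" "summable (\<lambda>n. norm (tm t a b (- int n - 1)))"
proof -
  have c: "pi * Im t > 0" using assms by simp
  show "summable (\<lambda>n. norm (tm t a b (int n)))"
    using gauss_summable(1)[OF c, of a] unfolding norm_tm by (simp add: mult.assoc)
  show "summable (\<lambda>n. norm (tm t a b (- int n - 1)))"
    using gauss_summable(2)[OF c, of a] unfolding norm_tm by (simp add: mult.assoc)
qed

lemma tm_summable: "Im t > 0 \<Longrightarrow> tm t a b summable_on UNIV"
  by (rule int_summable_split[OF tm_summable_parts])

lemma tm_norm_summable: "Im t > 0 \<Longrightarrow> (\<lambda>n. norm (tm t a b n)) summable_on UNIV"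
  using tm_summable summable_on_iff_abs_summable_on_complex by blast


lemma exp_int: "exp (2 * pi * \<i> * of_int m) = 1"
  using exp_integer_2pi[of "of_int m"] by (simp add: mult.commute mult.left_commute)

lemma exp_cong_int:
  assumes "X = Y + of_int m"
  shows "exp (2 * pi * \<i> * X) = exp (2 * pi * \<i> * Y)"
proof -
  have "exp (2 * pi * \<i> * X) = exp (2 * pi * \<i> * Y) * exp (2 * pi * \<i> * of_int m)"
    unfolding assms by (simp add: exp_add[symmetric] algebra_simps)
  thus ?thesis using exp_int[of m] by simp
qed

lemma tm_shift: "tm t (a + of_int k) b n = tm t a b (n + k)"
  unfolding tm_def by (simp add: algebra_simps)

lemma tm_neg: "tm t (- a) (- b) n = tm t a b (- n)"
  unfolding tm_def by (simp add: algebra_simps power2_eq_square)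

lemma tm_bshift: "tm t a (b + of_int k) n = exp (2 * pi * \<i> * (of_int k * of_real a)) * tm t a b n"
proof -
  have "tm t a (b + of_int k) n = exp (2 * pi * \<i> * ((1/2) * (of_int n + of_real a)^2 * t + (of_int n + of_real a) * of_real b + of_int k * of_real a) + 2 * pi * \<i> * of_int (n * k))"
    unfolding tm_def by (simp add: algebra_simps)
  also have "\<dots> = exp (2 * pi * \<i> * (of_int k * of_real a)) * tm t a b n"
    unfolding exp_add tm_def by (simp only: exp_int mult_1_right) (simp add: exp_add[symmetric] algebra_simps)
  finally show ?thesis .
qed

definition th :: "complex \<Rightarrow> real \<Rightarrow> real \<Rightarrow> complex" where
  "th t a b = (\<Sum>\<^sub>\<infinity>n. tm t a b n)"

lemma theta_const_th: "theta_const e e' t = th t (e/2) (e'/2)"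
  unfolding th_def theta_const_tm ..

lemma th_shift: "th t (a + of_int k) b = th t a b"
proof -
  have bij: "bij_betw (\<lambda>n. n + k) UNIV (UNIV::int set)"
    by (rule bij_betwI[where g="\<lambda>n. n - k"]) auto
  show ?thesis unfolding th_def tm_shift
    using infsum_reindex_bij_betw[OF bij, of "tm t a b"] by simp
qed

lemma th_neg: "th t (- a) (- b) = th t a b"
proof -
  have bij: "bij_betw (\<lambda>n. - n) UNIV (UNIV::int set)"
    by (rule bij_betwI[where g="\<lambda>n. - n"]) auto
  show ?thesis unfolding th_def tm_neg
    using infsum_reindex_bij_betw[OF bij, of "tm t a b"] by simp
qed

lemma th_bshift: "th t a (b + of_int k) = exp (2 * pi * \<i> * (of_int k * of_real a)) * th t a b"
  unfolding th_def tm_bshift by (rule infsum_cmult_right')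

lemma prod2_has_sum:
  fixes f :: "'a \<Rightarrow> complex" and g :: "'b \<Rightarrow> complex"
  assumes f: "f summable_on A" and g: "g summable_on B"
  shows "((\<lambda>(x,y). f x * g y) has_sum (infsum f A * infsum g B)) (A \<times> B)"
proof -
  define F where "F = (\<lambda>(x,y). f x * g y)"
  have F: "F (x,y) = f x * g y" for x y unfolding F_def by simp
  have fa: "(\<lambda>x. norm (f x)) summable_on A" using f summable_on_iff_abs_summable_on_complex by blast
  have ga: "(\<lambda>x. norm (g x)) summable_on B" using g summable_on_iff_abs_summable_on_complex by blast
  have abs: "(\<lambda>z. norm (F z)) summable_on (A \<times> B)"
  proof (rule Infinite_Sum.abs_summable_on_Sigma_iff[THEN iffD2], intro conjI ballI)
    fix x assume "x \<in> A"
    show "(\<lambda>y. norm (F (x, y))) summable_on B"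
      using summable_on_cmult_right[OF ga, of "norm (f x)"] by (simp add: F norm_mult)
  next
    have "(\<lambda>x. norm (f x) * infsum (\<lambda>y. norm (g y)) B) summable_on A"
      using summable_on_cmult_left[OF fa] by simp
    hence "(\<lambda>x. norm (norm (f x) * infsum (\<lambda>y. norm (g y)) B)) summable_on A"
      by (simp add: infsum_nonneg abs_mult)
    moreover have "infsum (\<lambda>y. norm (F (x, y))) B = norm (f x) * infsum (\<lambda>y. norm (g y)) B" for x
      by (simp add: F norm_mult infsum_cmult_right')
    ultimately show "(\<lambda>x. norm (infsum (\<lambda>y. norm (F (x, y))) B)) summable_on A"
      by simp
  qed
  hence sm: "F summable_on (A \<times> B)"
    using summable_on_iff_abs_summable_on_complex by blast
  have "infsum F (A \<times> B) = infsum (\<lambda>x. infsum (\<lambda>y. F (x,y)) B) A"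
    using infsum_Sigma_banach[OF sm] by simp
  also have "\<dots> = infsum (\<lambda>x. f x * infsum g B) A"
    by (simp add: F infsum_cmult_right')
  also have "\<dots> = infsum f A * infsum g B"
    by (simp add: infsum_cmult_left')
  finally have "(F has_sum (infsum f A * infsum g B)) (A \<times> B)" using sm by (metis has_sum_infsum)
  thus ?thesis unfolding F_def .
qed


type_synonym i4 = "int \<times> int \<times> int \<times> int"

definition G :: "complex \<Rightarrow> real \<Rightarrow> real \<Rightarrow> real \<Rightarrow> real \<Rightarrow> real \<Rightarrow> real \<Rightarrow> real \<Rightarrow> real \<Rightarrow> i4 \<Rightarrow> complex" where
  "G t a0 a1 a2 a3 b0 b1 b2 b3 = (\<lambda>(m0,m1,m2,m3). tm t a0 b0 m0 * (tm t a1 b1 m1 * (tm t a2 b2 m2 * tm t a3 b3 m3)))"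

definition Ev :: "i4 set" where "Ev = {(m0,m1,m2,m3). even (m0+m1+m2+m3)}"
definition Od :: "i4 set" where "Od = {(m0,m1,m2,m3). odd (m0+m1+m2+m3)}"

definition SE where "SE t a0 a1 a2 a3 b0 b1 b2 b3 = infsum (G t a0 a1 a2 a3 b0 b1 b2 b3) Ev"
definition SO where "SO t a0 a1 a2 a3 b0 b1 b2 b3 = infsum (G t a0 a1 a2 a3 b0 b1 b2 b3) Od"

lemma G_apply: "G t a0 a1 a2 a3 b0 b1 b2 b3 (m0,m1,m2,m3) = tm t a0 b0 m0 * (tm t a1 b1 m1 * (tm t a2 b2 m2 * tm t a3 b3 m3))"
  unfolding G_def by simp

lemma th_has_sum: "Im t > 0 \<Longrightarrow> (tm t a b has_sum th t a b) UNIV"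
  unfolding th_def using tm_summable by (rule has_sum_infsum)

lemma G_has_sum:
  assumes "Im t > 0"
  shows "(G t a0 a1 a2 a3 b0 b1 b2 b3 has_sum (th t a0 b0 * (th t a1 b1 * (th t a2 b2 * th t a3 b3)))) UNIV"
proof -
  have s: "\<And>a b. tm t a b summable_on UNIV" using tm_summable[OF assms] .
  have h1: "((\<lambda>(x,y). tm t a2 b2 x * tm t a3 b3 y) has_sum (th t a2 b2 * th t a3 b3)) UNIV"
    using prod2_has_sum[OF s s] unfolding th_def by simp
  define H1 where "H1 = (\<lambda>(x::int,y::int). tm t a2 b2 x * tm t a3 b3 y)"
  have H1s: "H1 summable_on UNIV" "infsum H1 UNIV = th t a2 b2 * th t a3 b3"
    using h1 unfolding H1_def by (auto simp: summable_on_def infsumI)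
  have h2: "((\<lambda>(x,y). tm t a1 b1 x * H1 y) has_sum (th t a1 b1 * (th t a2 b2 * th t a3 b3))) UNIV"
    using prod2_has_sum[OF s H1s(1)] unfolding th_def H1s(2) by simp
  define H2 where "H2 = (\<lambda>(x::int,y). tm t a1 b1 x * H1 y)"
  have H2s: "H2 summable_on UNIV" "infsum H2 UNIV = th t a1 b1 * (th t a2 b2 * th t a3 b3)"
    using h2 unfolding H2_def by (auto simp: summable_on_def infsumI)
  have h3: "((\<lambda>(x,y). tm t a0 b0 x * H2 y) has_sum (th t a0 b0 * (th t a1 b1 * (th t a2 b2 * th t a3 b3)))) UNIV"
    using prod2_has_sum[OF s H2s(1)] unfolding th_def H2s(2) by simp
  have "G t a0 a1 a2 a3 b0 b1 b2 b3 = (\<lambda>(x,y). tm t a0 b0 x * H2 y)"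
    unfolding G_def H2_def H1_def by (auto simp: fun_eq_iff)
  thus ?thesis using h3 by simp
qed

lemma Ev_Od: "Ev \<union> Od = UNIV" "Ev \<inter> Od = {}"
  unfolding Ev_def Od_def by auto

lemma prod4:
  assumes "Im t > 0"
  shows "th t a0 b0 * th t a1 b1 * th t a2 b2 * th t a3 b3 =
         SE t a0 a1 a2 a3 b0 b1 b2 b3 + SO t a0 a1 a2 a3 b0 b1 b2 b3"
proof -
  let ?G = "G t a0 a1 a2 a3 b0 b1 b2 b3"
  have hs: "(?G has_sum (th t a0 b0 * (th t a1 b1 * (th t a2 b2 * th t a3 b3)))) UNIV"
    by (rule G_has_sum[OF assms])
  hence sm: "?G summable_on UNIV" by (auto simp: summable_on_def)
  have "infsum ?G UNIV = infsum ?G Ev + infsum ?G Od"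
    using infsum_Un_disjoint[OF summable_on_subset_banach[OF sm] summable_on_subset_banach[OF sm] Ev_Od(2)] Ev_Od(1)
    by simp
  thus ?thesis using infsumI[OF hs] unfolding SE_def SO_def by (simp add: mult.assoc)
qed

lemma reindex_lemma:
  fixes F F' :: "_ \<Rightarrow> complex"
  assumes "bij_betw g A B" "\<And>m. m \<in> A \<Longrightarrow> F (g m) = c * F' m"
  shows "infsum F B = c * infsum F' A"
proof -
  have "infsum F B = infsum (\<lambda>m. F (g m)) A" using infsum_reindex_bij_betw[OF assms(1), of F] by simp
  also have "\<dots> = infsum (\<lambda>m. c * F' m) A" by (rule infsum_cong) (use assms(2) in auto)
  also have "\<dots> = c * infsum F' A" by (rule infsum_cmult_right')
  finally show ?thesis .
qed

lemma G_QL: "G t a0 a1 a2 a3 b0 b1 b2 b3 (m0,m1,m2,m3) =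
   exp (2 * pi * \<i> * ((1/2) * of_real ((of_int m0+a0)^2 + (of_int m1+a1)^2 + (of_int m2+a2)^2 + (of_int m3+a3)^2) * t
        + of_real ((of_int m0+a0)*b0 + (of_int m1+a1)*b1 + (of_int m2+a2)*b2 + (of_int m3+a3)*b3)))"
  unfolding G_apply tm_def exp_add[symmetric]
  by (rule arg_cong[where f=exp]) (simp add: algebra_simps)

lemma G_QL_eq:
  assumes "(of_int m0+a0)^2 + (of_int m1+a1)^2 + (of_int m2+a2)^2 + (of_int m3+a3)^2 =
           (of_int n0+c0)^2 + (of_int n1+c1)^2 + (of_int n2+c2)^2 + (of_int n3+c3)^2"
  assumes "(of_int m0+a0)*b0 + (of_int m1+a1)*b1 + (of_int m2+a2)*b2 + (of_int m3+a3)*b3 =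
           (of_int n0+c0)*d0 + (of_int n1+c1)*d1 + (of_int n2+c2)*d2 + (of_int n3+c3)*d3 + K + of_int j"
  shows "G t a0 a1 a2 a3 b0 b1 b2 b3 (m0,m1,m2,m3) = exp (2 * pi * \<i> * of_real K) * G t c0 c1 c2 c3 d0 d1 d2 d3 (n0,n1,n2,n3)"
proof -
  have "G t a0 a1 a2 a3 b0 b1 b2 b3 (m0,m1,m2,m3) =
    exp (2 * pi * \<i> * ((1/2) * of_real ((of_int n0+c0)^2 + (of_int n1+c1)^2 + (of_int n2+c2)^2 + (of_int n3+c3)^2) * t
        + of_real ((of_int n0+c0)*d0 + (of_int n1+c1)*d1 + (of_int n2+c2)*d2 + (of_int n3+c3)*d3) + of_real K))"
    unfolding G_QL assms(1) assms(2)
    by (rule exp_cong_int[where m=j]) (simp add: algebra_simps)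
  also have "\<dots> = exp (2 * pi * \<i> * of_real K) * G t c0 c1 c2 c3 d0 d1 d2 d3 (n0,n1,n2,n3)"
    unfolding G_QL by (simp add: exp_add[symmetric] algebra_simps)
  finally show ?thesis .
qed

lemma SO_shift: "SO t a0 a1 a2 a3 b0 b1 b2 b3 = SE t (a0+1) a1 a2 a3 b0 b1 b2 b3"
proof -
  have bij: "bij_betw (\<lambda>(m0,m1,m2,m3). (m0+1,m1,m2,m3)) Ev Od"
    by (rule bij_betwI[where g="\<lambda>(m0,m1,m2,m3). (m0-1,m1,m2,m3)"]) (auto simp: Ev_def Od_def)
  have "SO t a0 a1 a2 a3 b0 b1 b2 b3 = 1 * SE t (a0+1) a1 a2 a3 b0 b1 b2 b3"
    unfolding SO_def SE_def
  proof (rule reindex_lemma[OF bij])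
    fix m :: i4 assume "m \<in> Ev"
    obtain m0 m1 m2 m3 where m: "m = (m0,m1,m2,m3)" by (cases m) auto
    show "G t a0 a1 a2 a3 b0 b1 b2 b3 ((\<lambda>(m0,m1,m2,m3). (m0+1,m1,m2,m3)) m) = 1 * G t (a0+1) a1 a2 a3 b0 b1 b2 b3 m"
    proof -
      have "G t a0 a1 a2 a3 b0 b1 b2 b3 (m0+1,m1,m2,m3) = exp (2 * pi * \<i> * of_real 0) * G t (a0+1) a1 a2 a3 b0 b1 b2 b3 (m0,m1,m2,m3)"
        by (rule G_QL_eq[where j=0]) (simp_all add: algebra_simps)
      thus ?thesis unfolding m by simp
    qed
  qed
  thus ?thesis by simp
qed

definition Phi :: "i4 \<Rightarrow> i4" where
  "Phi = (\<lambda>(m0,m1,m2,m3). ((m0+m1+m2+m3) div 2, (m0+m1+m2+m3) div 2 - m2 - m3,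
                          (m0+m1+m2+m3) div 2 - m1 - m3, (m0+m1+m2+m3) div 2 - m1 - m2))"

lemma Phi_Ev: "m \<in> Ev \<Longrightarrow> Phi m \<in> Ev \<and> Phi (Phi m) = m"
  by (cases m) (auto simp: Phi_def Ev_def; presburger)

lemma Phi_bij_Ev: "bij_betw Phi Ev Ev"
  by (rule bij_betwI[where g=Phi]) (use Phi_Ev in auto)

lemma SE_T: "SE t a0 a1 a2 a3 b0 b1 b2 b3 =
  SE t ((a0+a1+a2+a3)/2) ((a0+a1-a2-a3)/2) ((a0-a1+a2-a3)/2) ((a0-a1-a2+a3)/2)
       ((b0+b1+b2+b3)/2) ((b0+b1-b2-b3)/2) ((b0-b1+b2-b3)/2) ((b0-b1-b2+b3)/2)"
proof -
  have "SE t a0 a1 a2 a3 b0 b1 b2 b3 = 1 * SE t ((a0+a1+a2+a3)/2) ((a0+a1-a2-a3)/2) ((a0-a1+a2-a3)/2) ((a0-a1-a2+a3)/2)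
       ((b0+b1+b2+b3)/2) ((b0+b1-b2-b3)/2) ((b0-b1+b2-b3)/2) ((b0-b1-b2+b3)/2)"
    unfolding SE_def
  proof (rule reindex_lemma[OF Phi_bij_Ev])
    fix m :: i4 assume "m \<in> Ev"
    obtain m0 m1 m2 m3 where m: "m = (m0,m1,m2,m3)" by (cases m) auto
    from \<open>m \<in> Ev\<close> have "even (m0+m1+m2+m3)" unfolding m Ev_def by simp
    then obtain k where k: "m0+m1+m2+m3 = 2*k" by (rule evenE)
    have Pm: "Phi m = (k, k-m2-m3, k-m1-m3, k-m1-m2)" unfolding m Phi_def using k by simp
    have h: "real_of_int m0 = 2 * of_int k - of_int m1 - of_int m2 - of_int m3"
      using arg_cong[OF k, of real_of_int] by simp
    have "G t a0 a1 a2 a3 b0 b1 b2 b3 (k, k-m2-m3, k-m1-m3, k-m1-m2) = exp (2 * pi * \<i> * of_real 0) *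
      G t ((a0+a1+a2+a3)/2) ((a0+a1-a2-a3)/2) ((a0-a1+a2-a3)/2) ((a0-a1-a2+a3)/2)
       ((b0+b1+b2+b3)/2) ((b0+b1-b2-b3)/2) ((b0-b1+b2-b3)/2) ((b0-b1-b2+b3)/2) (m0,m1,m2,m3)"
      by (rule G_QL_eq[where j=0]) (unfold h of_int_diff, (simp add: power2_eq_square field_simps; algebra)+)
    thus "G t a0 a1 a2 a3 b0 b1 b2 b3 (Phi m) = 1 * G t ((a0+a1+a2+a3)/2) ((a0+a1-a2-a3)/2) ((a0-a1+a2-a3)/2) ((a0-a1-a2+a3)/2)
       ((b0+b1+b2+b3)/2) ((b0+b1-b2-b3)/2) ((b0-b1+b2-b3)/2) ((b0-b1-b2+b3)/2) m"
      using Pm unfolding m by simp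
  qed
  thus ?thesis by simp
qed

definition Psi :: "i4 \<Rightarrow> i4" where
  "Psi = (\<lambda>(m0,m1,m2,m3). ((m0+m1+m2+m3) div 2 + 1, (m0+m1+m2+m3) div 2 - m2 - m3,
                          (m0+m1+m2+m3) div 2 - m1 - m3, (m0+m1+m2+m3) div 2 - m1 - m2))"

lemma Psi_Ev: "m \<in> Ev \<Longrightarrow> Psi m \<in> Od \<and> Phi (Psi m) = m"
  by (cases m) (auto simp: Phi_def Psi_def Ev_def Od_def; presburger)

lemma Phi_Od: "m \<in> Od \<Longrightarrow> Phi m \<in> Ev \<and> Psi (Phi m) = m"
  by (cases m) (auto simp: Phi_def Psi_def Ev_def Od_def; presburger)

lemma Psi_bij: "bij_betw Psi Ev Od"
  by (rule bij_betwI[where g=Phi]) (use Psi_Ev Phi_Od in auto)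

lemma SO_T: "SO t a0 a1 a2 a3 b0 b1 b2 b3 =
  SE t ((a0+a1+a2+a3)/2 + 1/2) ((a0+a1-a2-a3)/2 + 1/2) ((a0-a1+a2-a3)/2 + 1/2) ((a0-a1-a2+a3)/2 + 1/2)
       ((b0+b1+b2+b3)/2) ((b0+b1-b2-b3)/2) ((b0-b1+b2-b3)/2) ((b0-b1-b2+b3)/2)"
proof -
  have "SO t a0 a1 a2 a3 b0 b1 b2 b3 = 1 * SE t ((a0+a1+a2+a3)/2 + 1/2) ((a0+a1-a2-a3)/2 + 1/2) ((a0-a1+a2-a3)/2 + 1/2) ((a0-a1-a2+a3)/2 + 1/2)
       ((b0+b1+b2+b3)/2) ((b0+b1-b2-b3)/2) ((b0-b1+b2-b3)/2) ((b0-b1-b2+b3)/2)"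
    unfolding SE_def SO_def
  proof (rule reindex_lemma[OF Psi_bij])
    fix m :: i4 assume "m \<in> Ev"
    obtain m0 m1 m2 m3 where m: "m = (m0,m1,m2,m3)" by (cases m) auto
    from \<open>m \<in> Ev\<close> have "even (m0+m1+m2+m3)" unfolding m Ev_def by simp
    then obtain k where k: "m0+m1+m2+m3 = 2*k" by (rule evenE)
    have Pm: "Psi m = (k+1, k-m2-m3, k-m1-m3, k-m1-m2)" unfolding m Psi_def using k by simp
    have h: "real_of_int m0 = 2 * of_int k - of_int m1 - of_int m2 - of_int m3"
      using arg_cong[OF k, of real_of_int] by simp
    have "G t a0 a1 a2 a3 b0 b1 b2 b3 (k+1, k-m2-m3, k-m1-m3, k-m1-m2) = exp (2 * pi * \<i> * of_real 0) *
      G t ((a0+a1+a2+a3)/2 + 1/2) ((a0+a1-a2-a3)/2 + 1/2) ((a0-a1+a2-a3)/2 + 1/2) ((a0-a1-a2+a3)/2 + 1/2)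
       ((b0+b1+b2+b3)/2) ((b0+b1-b2-b3)/2) ((b0-b1+b2-b3)/2) ((b0-b1-b2+b3)/2) (m0,m1,m2,m3)"
      by (rule G_QL_eq[where j=0]) (unfold h of_int_diff of_int_add, (simp add: power2_eq_square field_simps; algebra)+)
    thus "G t a0 a1 a2 a3 b0 b1 b2 b3 (Psi m) = 1 * G t ((a0+a1+a2+a3)/2 + 1/2) ((a0+a1-a2-a3)/2 + 1/2) ((a0-a1+a2-a3)/2 + 1/2) ((a0-a1-a2+a3)/2 + 1/2)
       ((b0+b1+b2+b3)/2) ((b0+b1-b2-b3)/2) ((b0-b1+b2-b3)/2) ((b0-b1-b2+b3)/2) m"
      using Pm unfolding m by simp
  qed
  thus ?thesis by simp
qed

lemma SE_flip0: "SE t (- a0) a1 a2 a3 (- b0) b1 b2 b3 = SE t a0 a1 a2 a3 b0 b1 b2 b3"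
proof -
  have bij: "bij_betw (\<lambda>(m0,m1,m2,m3). (-m0,m1,m2,m3)) Ev Ev"
    by (rule bij_betwI[where g="\<lambda>(m0,m1,m2,m3). (-m0,m1,m2,m3)"]) (auto simp: Ev_def)
  have "SE t a0 a1 a2 a3 b0 b1 b2 b3 = 1 * SE t (- a0) a1 a2 a3 (- b0) b1 b2 b3"
    unfolding SE_def
  proof (rule reindex_lemma[OF bij])
    fix m :: i4 assume "m \<in> Ev"
    obtain m0 m1 m2 m3 where m: "m = (m0,m1,m2,m3)" by (cases m) auto
    have "G t a0 a1 a2 a3 b0 b1 b2 b3 (-m0,m1,m2,m3) = exp (2 * pi * \<i> * of_real 0) * G t (- a0) a1 a2 a3 (- b0) b1 b2 b3 (m0,m1,m2,m3)"
      by (rule G_QL_eq[where j=0]) (simp_all add: power2_eq_square algebra_simps)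
    thus "G t a0 a1 a2 a3 b0 b1 b2 b3 ((\<lambda>(m0,m1,m2,m3). (-m0,m1,m2,m3)) m) = 1 * G t (- a0) a1 a2 a3 (- b0) b1 b2 b3 m"
      unfolding m by simp
  qed
  thus ?thesis by simp
qed

lemma SE_flipall: "SE t (- a0) (- a1) (- a2) (- a3) (- b0) (- b1) (- b2) (- b3) = SE t a0 a1 a2 a3 b0 b1 b2 b3"
proof -
  have bij: "bij_betw (\<lambda>(m0,m1,m2,m3). (-m0,-m1,-m2,-m3)) Ev Ev"
    by (rule bij_betwI[where g="\<lambda>(m0,m1,m2,m3). (-m0,-m1,-m2,-m3)"]) (clarsimp simp: Ev_def; presburger)+
  have "SE t a0 a1 a2 a3 b0 b1 b2 b3 = 1 * SE t (- a0) (- a1) (- a2) (- a3) (- b0) (- b1) (- b2) (- b3)"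
    unfolding SE_def
  proof (rule reindex_lemma[OF bij])
    fix m :: i4 assume "m \<in> Ev"
    obtain m0 m1 m2 m3 where m: "m = (m0,m1,m2,m3)" by (cases m) auto
    have "G t a0 a1 a2 a3 b0 b1 b2 b3 (-m0,-m1,-m2,-m3) = exp (2 * pi * \<i> * of_real 0) * G t (- a0) (- a1) (- a2) (- a3) (- b0) (- b1) (- b2) (- b3) (m0,m1,m2,m3)"
      by (rule G_QL_eq[where j=0]) (simp_all add: power2_eq_square algebra_simps)
    thus "G t a0 a1 a2 a3 b0 b1 b2 b3 ((\<lambda>(m0,m1,m2,m3). (-m0,-m1,-m2,-m3)) m) = 1 * G t (- a0) (- a1) (- a2) (- a3) (- b0) (- b1) (- b2) (- b3) m"
      unfolding m by simp
  qed
  thus ?thesis by simp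
qed

lemma SE_ashift:
  assumes "even (u0+u1+u2+u3)"
  shows "SE t (a0 + of_int u0) (a1 + of_int u1) (a2 + of_int u2) (a3 + of_int u3) b0 b1 b2 b3 = SE t a0 a1 a2 a3 b0 b1 b2 b3"
proof -
  have bij: "bij_betw (\<lambda>(m0,m1,m2,m3). (m0+u0,m1+u1,m2+u2,m3+u3)) Ev Ev"
    by (rule bij_betwI[where g="\<lambda>(m0,m1,m2,m3). (m0-u0,m1-u1,m2-u2,m3-u3)"]) (use assms in \<open>clarsimp simp: Ev_def; presburger\<close>)+
  have "SE t a0 a1 a2 a3 b0 b1 b2 b3 = 1 * SE t (a0 + of_int u0) (a1 + of_int u1) (a2 + of_int u2) (a3 + of_int u3) b0 b1 b2 b3"
    unfolding SE_def
  proof (rule reindex_lemma[OF bij])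
    fix m :: i4 assume "m \<in> Ev"
    obtain m0 m1 m2 m3 where m: "m = (m0,m1,m2,m3)" by (cases m) auto
    have "G t a0 a1 a2 a3 b0 b1 b2 b3 (m0+u0,m1+u1,m2+u2,m3+u3) = exp (2 * pi * \<i> * of_real 0) * G t (a0 + of_int u0) (a1 + of_int u1) (a2 + of_int u2) (a3 + of_int u3) b0 b1 b2 b3 (m0,m1,m2,m3)"
      by (rule G_QL_eq[where j=0]) (simp_all add: algebra_simps)
    thus "G t a0 a1 a2 a3 b0 b1 b2 b3 ((\<lambda>(m0,m1,m2,m3). (m0+u0,m1+u1,m2+u2,m3+u3)) m) = 1 * G t (a0 + of_int u0) (a1 + of_int u1) (a2 + of_int u2) (a3 + of_int u3) b0 b1 b2 b3 m"
      unfolding m by simp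
  qed
  thus ?thesis by simp
qed

lemma SE_bshift:
  assumes "\<And>m0 m1 m2 m3. even (m0+m1+m2+m3) \<Longrightarrow> \<exists>j::int.
     (of_int m0 + a0) * c0 + (of_int m1 + a1) * c1 + (of_int m2 + a2) * c2 + (of_int m3 + a3) * c3 = K + of_int j"
  shows "SE t a0 a1 a2 a3 (b0 + c0) (b1 + c1) (b2 + c2) (b3 + c3) = exp (2 * pi * \<i> * of_real K) * SE t a0 a1 a2 a3 b0 b1 b2 b3"
  unfolding SE_def
proof (rule reindex_lemma[OF bij_betw_id[unfolded id_def]])
  fix m :: i4 assume "m \<in> Ev"
  obtain m0 m1 m2 m3 where m: "m = (m0,m1,m2,m3)" by (cases m) auto
  from \<open>m \<in> Ev\<close> have "even (m0+m1+m2+m3)" unfolding m Ev_def by simp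
  from assms[OF this] obtain j where j: "(of_int m0 + a0) * c0 + (of_int m1 + a1) * c1 + (of_int m2 + a2) * c2 + (of_int m3 + a3) * c3 = K + of_int j" by blast
  have "G t a0 a1 a2 a3 (b0 + c0) (b1 + c1) (b2 + c2) (b3 + c3) (m0,m1,m2,m3) = exp (2 * pi * \<i> * of_real K) * G t a0 a1 a2 a3 b0 b1 b2 b3 (m0,m1,m2,m3)"
    by (rule G_QL_eq[where j=j]) (use j in \<open>simp_all add: algebra_simps\<close>)
  thus "G t a0 a1 a2 a3 (b0 + c0) (b1 + c1) (b2 + c2) (b3 + c3) m = exp (2 * pi * \<i> * of_real K) * G t a0 a1 a2 a3 b0 b1 b2 b3 m"
    unfolding m by simp
qed


lemma SE_T':
  assumes "x0 = (a0+a1+a2+a3)/2" "x1 = (a0+a1-a2-a3)/2" "x2 = (a0-a1+a2-a3)/2" "x3 = (a0-a1-a2+a3)/2"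
          "y0 = (b0+b1+b2+b3)/2" "y1 = (b0+b1-b2-b3)/2" "y2 = (b0-b1+b2-b3)/2" "y3 = (b0-b1-b2+b3)/2"
  shows "SE t a0 a1 a2 a3 b0 b1 b2 b3 = SE t x0 x1 x2 x3 y0 y1 y2 y3"
  unfolding assms by (rule SE_T)

lemma SO_T':
  assumes "x0 = (a0+a1+a2+a3)/2 + 1/2" "x1 = (a0+a1-a2-a3)/2 + 1/2" "x2 = (a0-a1+a2-a3)/2 + 1/2" "x3 = (a0-a1-a2+a3)/2 + 1/2"
          "y0 = (b0+b1+b2+b3)/2" "y1 = (b0+b1-b2-b3)/2" "y2 = (b0-b1+b2-b3)/2" "y3 = (b0-b1-b2+b3)/2"
  shows "SO t a0 a1 a2 a3 b0 b1 b2 b3 = SE t x0 x1 x2 x3 y0 y1 y2 y3"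
  unfolding assms by (rule SO_T)

lemma SO_shift': "x0 = a0 + 1 \<Longrightarrow> SO t a0 a1 a2 a3 b0 b1 b2 b3 = SE t x0 a1 a2 a3 b0 b1 b2 b3"
  using SO_shift by simp

lemma SE_flip0': "x0 = - a0 \<Longrightarrow> y0 = - b0 \<Longrightarrow> SE t x0 a1 a2 a3 y0 b1 b2 b3 = SE t a0 a1 a2 a3 b0 b1 b2 b3"
  using SE_flip0 by simp

lemma SE_flipall': "x0 = - a0 \<Longrightarrow> x1 = - a1 \<Longrightarrow> x2 = - a2 \<Longrightarrow> x3 = - a3 \<Longrightarrow>
   y0 = - b0 \<Longrightarrow> y1 = - b1 \<Longrightarrow> y2 = - b2 \<Longrightarrow> y3 = - b3 \<Longrightarrow>
   SE t x0 x1 x2 x3 y0 y1 y2 y3 = SE t a0 a1 a2 a3 b0 b1 b2 b3"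
  using SE_flipall by simp

lemma SE_shift20: "x0 = a0 + 2 \<Longrightarrow> SE t x0 a1 a2 a3 b0 b1 b2 b3 = SE t a0 a1 a2 a3 b0 b1 b2 b3"
  using SE_ashift[of 2 0 0 0 t a0 a1 a2 a3] by simp

lemma th_shift1: "x = a + 1 \<Longrightarrow> th t x b = th t a b"
  using th_shift[of t a 1 b] by simp

lemma th_neg': "x = - a \<Longrightarrow> y = - b \<Longrightarrow> th t x y = th t a b"
  using th_neg by simp

lemma th_bshift1: "y = b + 1 \<Longrightarrow> th t a y = exp (2 * pi * \<i> * of_real a) * th t a b"
  using th_bshift[of t a b 1] by simp

lemma SE_bshift_int:
  assumes "y0 = b0 + of_int ka" "y1 = b1 + of_int kb" "y2 = b2 + of_int kc" "y3 = b3 + of_int kd"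
    "K = a0 * of_int ka + a1 * of_int kb + a2 * of_int kc + a3 * of_int kd"
  shows "SE t a0 a1 a2 a3 y0 y1 y2 y3 = exp (2 * pi * \<i> * of_real K) * SE t a0 a1 a2 a3 b0 b1 b2 b3"
  unfolding assms(1-4)
proof (rule SE_bshift)
  fix m0 m1 m2 m3 :: int
  show "\<exists>j::int. (of_int m0 + a0) * of_int ka + (of_int m1 + a1) * of_int kb + (of_int m2 + a2) * of_int kc + (of_int m3 + a3) * of_int kd = K + of_int j"
    by (rule exI[where x="m0*ka+m1*kb+m2*kc+m3*kd"]) (simp add: assms(5) algebra_simps)
qed

lemma SE_bshift_h:
  assumes "y0 = b0 + 1/2" "y1 = b1 + 1/2" "y2 = b2 + 1/2" "y3 = b3 + 1/2"
    "K = (a0 + a1 + a2 + a3) / 2"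
  shows "SE t a0 a1 a2 a3 y0 y1 y2 y3 = exp (2 * pi * \<i> * of_real K) * SE t a0 a1 a2 a3 b0 b1 b2 b3"
  unfolding assms(1-4)
proof (rule SE_bshift)
  fix m0 m1 m2 m3 :: int
  assume "even (m0 + m1 + m2 + m3)"
  then obtain k where k: "m0 + m1 + m2 + m3 = 2 * k" by (rule evenE)
  have k': "real_of_int m0 + of_int m1 + of_int m2 + of_int m3 = 2 * of_int k"
    using arg_cong[OF k, of real_of_int] by simp
  show "\<exists>j::int. (of_int m0 + a0) * (1/2) + (of_int m1 + a1) * (1/2) + (of_int m2 + a2) * (1/2) + (of_int m3 + a3) * (1/2) = K + of_int j"
    by (rule exI[where x=k]) (use k' in \<open>simp add: assms(5) field_simps\<close>)
qed

lemma e_shift: "r = s + of_int m \<Longrightarrow> exp (2 * pi * \<i> * complex_of_real r) = exp (2 * pi * \<i> * complex_of_real s)"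
  by (rule exp_cong_int[where m=m]) simp

lemma e_half: "r = s + 1/2 \<Longrightarrow> exp (2 * pi * \<i> * complex_of_real r) = - exp (2 * pi * \<i> * complex_of_real s)"
proof -
  assume r: "r = s + 1/2"
  have "exp (2 * pi * \<i> * complex_of_real r) = exp (2 * pi * \<i> * complex_of_real s) * exp (pi * \<i>)"
    unfolding r exp_add[symmetric] by (simp add: algebra_simps)
  thus ?thesis by simp
qed

lemma e_mult: "exp (2 * pi * \<i> * complex_of_real a) * exp (2 * pi * \<i> * complex_of_real b) = exp (2 * pi * \<i> * complex_of_real (a + b))"
  by (simp add: exp_add[symmetric] distrib_left)

lemma e_solve:
  assumes "y = exp (2 * pi * \<i> * complex_of_real a) * x" "c = - a"
  shows "x = exp (2 * pi * \<i> * complex_of_real c) * y"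
proof -
  have "exp (2 * pi * \<i> * complex_of_real c) * y = (exp (2 * pi * \<i> * complex_of_real c) * exp (2 * pi * \<i> * complex_of_real a)) * x"
    unfolding assms(1) by (simp only: mult.assoc)
  also have "\<dots> = x" unfolding e_mult assms(2) by simp
  finally show ?thesis by simp
qed


lemma ident1:
  assumes t: "Im t > 0"
  shows "th t (1/2) (1/10) * th t (3/10) (3/10) ^ 3 =
    exp (2 * pi * \<i> * of_real (2/5)) * th t (1/10) (9/10) ^ 3 * th t (3/10) (1/2)
    + exp (2 * pi * \<i> * of_real (1/5)) * th t (3/10) (1/10) * th t (1/10) (3/10) ^ 3"
proof -
  let ?e = "\<lambda>r. exp (2 * pi * \<i> * complex_of_real r)"
  define A where "A = SE t (7/10) (1/10) (1/10) (1/10) (1/2) (-1/10) (-1/10) (-1/10)"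
  define X where "X = SE t (17/10) (1/10) (1/10) (1/10) (-1/2) (-1/10) (-1/10) (-1/10)"
  define Y where "Y = SE t (6/5) (3/5) (3/5) (3/5) (-1/2) (-1/10) (-1/10) (-1/10)"
  have P0: "th t (1/2) (1/10) * th t (3/10) (3/10) ^ 3 = A + ?e (6/5) * Y"
  proof -
    have "th t (1/2) (1/10) * th t (3/10) (3/10) ^ 3 = th t (1/2) (1/10) * th t (3/10) (3/10) * th t (3/10) (3/10) * th t (3/10) (3/10)"
      by (simp add: power3_eq_cube mult.assoc)
    also have "\<dots> = SE t (1/2) (3/10) (3/10) (3/10) (1/10) (3/10) (3/10) (3/10) + SO t (1/2) (3/10) (3/10) (3/10) (1/10) (3/10) (3/10) (3/10)"
      by (rule prod4[OF t])
    also have "SE t (1/2) (3/10) (3/10) (3/10) (1/10) (3/10) (3/10) (3/10) = A"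
      unfolding A_def by (rule SE_T') simp_all
    also have "SO t (1/2) (3/10) (3/10) (3/10) (1/10) (3/10) (3/10) (3/10) = SE t (6/5) (3/5) (3/5) (3/5) (1/2) (-1/10) (-1/10) (-1/10)"
      by (rule SO_T') simp_all
    also have "\<dots> = ?e (6/5) * Y"
      unfolding Y_def by (rule SE_bshift_int[where ka=1 and kb=0 and kc=0 and kd=0]) simp_all
    finally show ?thesis .
  qed
  have P1: "th t (7/10) (1/2) * th t (1/10) (-1/10) ^ 3 = A + ?e (17/10) * X"
  proof -
    have "th t (7/10) (1/2) * th t (1/10) (-1/10) ^ 3 = th t (7/10) (1/2) * th t (1/10) (-1/10) * th t (1/10) (-1/10) * th t (1/10) (-1/10)"
      by (simp add: power3_eq_cube mult.assoc)
    also have "\<dots> = SE t (7/10) (1/10) (1/10) (1/10) (1/2) (-1/10) (-1/10) (-1/10) + SO t (7/10) (1/10) (1/10) (1/10) (1/2) (-1/10) (-1/10) (-1/10)"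
      by (rule prod4[OF t])
    also have "SO t (7/10) (1/10) (1/10) (1/10) (1/2) (-1/10) (-1/10) (-1/10) = SE t (17/10) (1/10) (1/10) (1/10) (1/2) (-1/10) (-1/10) (-1/10)"
      by (rule SO_shift') simp
    also have "\<dots> = ?e (17/10) * X"
      unfolding X_def by (rule SE_bshift_int[where ka=1 and kb=0 and kc=0 and kd=0]) simp_all
    finally show ?thesis unfolding A_def .
  qed
  have P2: "th t (3/10) (1/10) * th t (1/10) (3/10) ^ 3 = X + Y"
  proof -
    have "th t (3/10) (1/10) * th t (1/10) (3/10) ^ 3 = th t (3/10) (1/10) * th t (1/10) (3/10) * th t (1/10) (3/10) * th t (1/10) (3/10)"
      by (simp add: power3_eq_cube mult.assoc)
    also have "\<dots> = SE t (3/10) (1/10) (1/10) (1/10) (1/10) (3/10) (3/10) (3/10) + SO t (3/10) (1/10) (1/10) (1/10) (1/10) (3/10) (3/10) (3/10)"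
      by (rule prod4[OF t])
    also have "SE t (3/10) (1/10) (1/10) (1/10) (1/10) (3/10) (3/10) (3/10) = SE t (3/10) (1/10) (1/10) (1/10) (1/2) (-1/10) (-1/10) (-1/10)"
      by (rule SE_T') simp_all
    also have "\<dots> = SE t (-3/10) (1/10) (1/10) (1/10) (-1/2) (-1/10) (-1/10) (-1/10)"
      by (rule SE_flip0') simp_all
    also have "\<dots> = X"
      unfolding X_def by (rule SE_shift20[symmetric]) simp
    also have "SO t (3/10) (1/10) (1/10) (1/10) (1/10) (3/10) (3/10) (3/10) = SE t (4/5) (3/5) (3/5) (3/5) (1/2) (-1/10) (-1/10) (-1/10)"
      by (rule SO_T') simp_all
    also have "\<dots> = SE t (-4/5) (3/5) (3/5) (3/5) (-1/2) (-1/10) (-1/10) (-1/10)"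
      by (rule SE_flip0') simp_all
    also have "\<dots> = Y"
      unfolding Y_def by (rule SE_shift20[symmetric]) simp
    finally show ?thesis .
  qed
  have c9: "th t (1/10) (-1/10) = ?e (-1/10) * th t (1/10) (9/10)"
    by (rule e_solve[where a="1/10"]) (rule th_bshift1, simp_all)
  have d5: "th t (7/10) (1/2) = ?e (-3/10) * th t (3/10) (1/2)"
  proof -
    have "th t (7/10) (1/2) = th t (-7/10) (-1/2)" by (rule th_neg'[symmetric]) simp_all
    also have "\<dots> = th t (3/10) (-1/2)" by (rule th_shift1[symmetric]) simp
    also have "\<dots> = ?e (-3/10) * th t (3/10) (1/2)"
      by (rule e_solve[where a="3/10"]) (rule th_bshift1, simp_all)
    finally show ?thesis .
  qed
  have ph1: "?e (6/5) = ?e (1/5)" by (rule e_shift[where m=1]) simp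
  have ph2: "?e (17/10) = - ?e (1/5)"
  proof -
    have "?e (17/10) = ?e (7/10)" by (rule e_shift[where m=1]) simp
    also have "\<dots> = - ?e (1/5)" by (rule e_half) simp
    finally show ?thesis .
  qed
  have ph3: "?e (-3/10) * ?e (-1/10) ^ 3 = ?e (2/5)"
  proof -
    show ?thesis unfolding power3_eq_cube e_mult by (rule e_shift[where m="-1"]) simp
  qed
  have alg1: "\<And>(a::complex) e x y. a + e * y = (a + (- e) * x) + e * (x + y)" by (simp add: algebra_simps)
  have alg2: "\<And>(p::complex) q C D. (p * D) * (q * C) ^ 3 = (p * q ^ 3) * C ^ 3 * D" by (simp add: power_mult_distrib algebra_simps)
  have "th t (1/2) (1/10) * th t (3/10) (3/10) ^ 3 = th t (7/10) (1/2) * th t (1/10) (-1/10) ^ 3 + ?e (1/5) * (th t (3/10) (1/10) * th t (1/10) (3/10) ^ 3)"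
    unfolding P0 P1 P2 ph1 ph2 by (rule alg1)
  also have "th t (7/10) (1/2) * th t (1/10) (-1/10) ^ 3 = (?e (-3/10) * ?e (-1/10) ^ 3) * th t (1/10) (9/10) ^ 3 * th t (3/10) (1/2)"
    unfolding c9 d5 by (rule alg2)
  finally show ?thesis unfolding ph3 by (simp only: mult.assoc)
qed


lemma ident2:
  assumes t: "Im t > 0"
  shows "th t (1/2) (3/10) * th t (1/10) (1/10) ^ 3 =
    th t (1/10) (7/10) * th t (3/10) (9/10) ^ 3 - th t (1/10) (1/2) * th t (3/10) (7/10) ^ 3"
proof -
  let ?e = "\<lambda>r. exp (2 * pi * \<i> * complex_of_real r)"
  define E0 where "E0 = SE t (1/2) (1/10) (1/10) (1/10) (3/10) (1/10) (1/10) (1/10)"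
  define O0 where "O0 = SE t (9/10) (7/10) (7/10) (7/10) (3/10) (1/10) (1/10) (1/10)"
  define O1 where "O1 = SO t (9/10) (7/10) (7/10) (7/10) (3/10) (1/10) (1/10) (1/10)"
  have P0: "th t (1/2) (3/10) * th t (1/10) (1/10) ^ 3 = E0 + O0"
  proof -
    have "th t (1/2) (3/10) * th t (1/10) (1/10) ^ 3 = th t (1/2) (3/10) * th t (1/10) (1/10) * th t (1/10) (1/10) * th t (1/10) (1/10)"
      by (simp add: power3_eq_cube mult.assoc)
    also have "\<dots> = SE t (1/2) (1/10) (1/10) (1/10) (3/10) (1/10) (1/10) (1/10) + SO t (1/2) (1/10) (1/10) (1/10) (3/10) (1/10) (1/10) (1/10)"
      by (rule prod4[OF t])
    also have "SO t (1/2) (1/10) (1/10) (1/10) (3/10) (1/10) (1/10) (1/10) = O0"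
      unfolding O0_def by (rule SO_T') simp_all
    finally show ?thesis unfolding E0_def .
  qed
  have P1: "th t (9/10) (3/10) * th t (7/10) (1/10) ^ 3 = O0 + O1"
  proof -
    have "th t (9/10) (3/10) * th t (7/10) (1/10) ^ 3 = th t (9/10) (3/10) * th t (7/10) (1/10) * th t (7/10) (1/10) * th t (7/10) (1/10)"
      by (simp add: power3_eq_cube mult.assoc)
    also have "\<dots> = O0 + O1" unfolding O0_def O1_def by (rule prod4[OF t])
    finally show ?thesis .
  qed
  have P2: "th t (1/10) (1/2) * th t (3/10) (7/10) ^ 3 = ?e (1/2) * E0 + (?e (-1/5) * (?e 1 * (?e (1/5) * O1)))"
  proof -
    have "th t (1/10) (1/2) * th t (3/10) (7/10) ^ 3 = th t (1/10) (1/2) * th t (3/10) (7/10) * th t (3/10) (7/10) * th t (3/10) (7/10)"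
      by (simp add: power3_eq_cube mult.assoc)
    also have "\<dots> = SE t (1/10) (3/10) (3/10) (3/10) (1/2) (7/10) (7/10) (7/10) + SO t (1/10) (3/10) (3/10) (3/10) (1/2) (7/10) (7/10) (7/10)"
      by (rule prod4[OF t])
    also have "SE t (1/10) (3/10) (3/10) (3/10) (1/2) (7/10) (7/10) (7/10) = SE t (1/2) (-1/10) (-1/10) (-1/10) (13/10) (-1/10) (-1/10) (-1/10)"
      by (rule SE_T') simp_all
    also have "\<dots> = SE t (-1/2) (1/10) (1/10) (1/10) (-13/10) (1/10) (1/10) (1/10)"
      by (rule SE_flipall') simp_all
    also have "\<dots> = SE t (1/2) (1/10) (1/10) (1/10) (13/10) (1/10) (1/10) (1/10)"
      by (rule SE_flip0') simp_all
    also have "\<dots> = ?e (1/2) * E0"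
      unfolding E0_def by (rule SE_bshift_int[where ka=1 and kb=0 and kc=0 and kd=0]) simp_all
    also have "SO t (1/10) (3/10) (3/10) (3/10) (1/2) (7/10) (7/10) (7/10) = SE t 1 (2/5) (2/5) (2/5) (13/10) (-1/10) (-1/10) (-1/10)"
      by (rule SO_T') simp_all
    also have "\<dots> = ?e (-1/5) * SE t 1 (2/5) (2/5) (2/5) (3/10) (9/10) (9/10) (9/10)"
      by (rule SE_bshift_int[where ka=1 and kb="-1" and kc="-1" and kd="-1"]) simp_all
    also have "SE t 1 (2/5) (2/5) (2/5) (3/10) (9/10) (9/10) (9/10) = SE t (-1) (-2/5) (-2/5) (-2/5) (-3/10) (-9/10) (-9/10) (-9/10)"
      by (rule SE_flipall') simp_all
    also have "\<dots> = SE t 1 (-2/5) (-2/5) (-2/5) (3/10) (-9/10) (-9/10) (-9/10)"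
      by (rule SE_flip0') simp_all
    also have "\<dots> = SE t (-1/10) (7/10) (7/10) (7/10) (-6/5) (3/5) (3/5) (3/5)"
      by (rule SE_T') simp_all
    also have "\<dots> = ?e 1 * SE t (-1/10) (7/10) (7/10) (7/10) (-17/10) (1/10) (1/10) (1/10)"
      by (rule SE_bshift_h) simp_all
    also have "SE t (-1/10) (7/10) (7/10) (7/10) (-17/10) (1/10) (1/10) (1/10) = ?e (1/5) * SE t (-1/10) (7/10) (7/10) (7/10) (3/10) (1/10) (1/10) (1/10)"
      by (rule SE_bshift_int[where ka="-2" and kb=0 and kc=0 and kd=0]) simp_all
    also have "SE t (-1/10) (7/10) (7/10) (7/10) (3/10) (1/10) (1/10) (1/10) = SE t (19/10) (7/10) (7/10) (7/10) (3/10) (1/10) (1/10) (1/10)"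
      by (rule SE_shift20[symmetric]) simp
    also have "\<dots> = O1"
      unfolding O1_def by (rule SO_shift'[symmetric]) simp
    finally show ?thesis .
  qed
  have ph1: "?e (1/2) = - 1"
  proof -
    have "?e (1/2) = - ?e 0" by (rule e_half) simp
    thus ?thesis by simp
  qed
  have ph2: "?e (-1/5) * (?e 1 * (?e (1/5) * O1)) = O1"
  proof -
    have "?e (-1/5) * (?e 1 * (?e (1/5) * O1)) = ?e (-1/5 + (1 + 1/5)) * O1"
      by (simp only: mult.assoc[symmetric] e_mult)
    also have "?e (-1/5 + (1 + 1/5)) = ?e 0" by (rule e_shift[where m=1]) simp
    finally show ?thesis by simp
  qed
  have c7: "th t (9/10) (3/10) = ?e (-1/10) * th t (1/10) (7/10)"
  proof -
    have "th t (9/10) (3/10) = th t (-9/10) (-3/10)" by (rule th_neg'[symmetric]) simp_all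
    also have "\<dots> = th t (1/10) (-3/10)" by (rule th_shift1[symmetric]) simp
    also have "\<dots> = ?e (-1/10) * th t (1/10) (7/10)"
      by (rule e_solve[where a="1/10"]) (rule th_bshift1, simp_all)
    finally show ?thesis .
  qed
  have d9: "th t (7/10) (1/10) = ?e (-3/10) * th t (3/10) (9/10)"
  proof -
    have "th t (7/10) (1/10) = th t (-7/10) (-1/10)" by (rule th_neg'[symmetric]) simp_all
    also have "\<dots> = th t (3/10) (-1/10)" by (rule th_shift1[symmetric]) simp
    also have "\<dots> = ?e (-3/10) * th t (3/10) (9/10)"
      by (rule e_solve[where a="3/10"]) (rule th_bshift1, simp_all)
    finally show ?thesis .
  qed
  have ph3: "?e (-1/10) * ?e (-3/10) ^ 3 = 1"
  proof -
    have "?e (-1/10) * ?e (-3/10) ^ 3 = ?e 0"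
      unfolding power3_eq_cube e_mult by (rule e_shift[where m="-1"]) simp
    thus ?thesis by simp
  qed
  have alg1: "\<And>(E::complex) O0 O1. E + O0 = (O0 + O1) - ((- 1) * E + O1)" by (simp add: algebra_simps)
  have alg2: "\<And>(p::complex) q C D. (p * C) * (q * D) ^ 3 = (p * q ^ 3) * C * D ^ 3" by (simp add: power_mult_distrib algebra_simps)
  have "th t (1/2) (3/10) * th t (1/10) (1/10) ^ 3 = th t (9/10) (3/10) * th t (7/10) (1/10) ^ 3 - th t (1/10) (1/2) * th t (3/10) (7/10) ^ 3"
    unfolding P0 P1 P2 ph1 ph2 by (rule alg1)
  also have "th t (9/10) (3/10) * th t (7/10) (1/10) ^ 3 = (?e (-1/10) * ?e (-3/10) ^ 3) * th t (1/10) (7/10) * th t (3/10) (9/10) ^ 3"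
    unfolding c7 d9 by (rule alg2)
  finally show ?thesis unfolding ph3 by simp
qed


definition qpoch :: "complex \<Rightarrow> nat \<Rightarrow> complex" where
  "qpoch p k = (\<Prod>i<k. 1 - p ^ Suc i)"

definition qbin :: "complex \<Rightarrow> nat \<Rightarrow> nat \<Rightarrow> complex" where
  "qbin p N i = (if i \<le> N then qpoch p N / (qpoch p i * qpoch p (N - i)) else 0)"

lemma qpoch_0 [simp]: "qpoch p 0 = 1" unfolding qpoch_def by simp
lemma qpoch_Suc: "qpoch p (Suc k) = qpoch p k * (1 - p ^ Suc k)" unfolding qpoch_def by simp

lemma qbin_0 [simp]: "qpoch p N \<noteq> 0 \<Longrightarrow> qbin p N 0 = 1" unfolding qbin_def by simp
lemma qbin_N [simp]: "qpoch p N \<noteq> 0 \<Longrightarrow> qbin p N N = 1" unfolding qbin_def by simp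
lemma qbin_gt [simp]: "N < i \<Longrightarrow> qbin p N i = 0" unfolding qbin_def by simp

lemma qpoch_factor_nz:
  assumes "\<And>k. qpoch p k \<noteq> 0"
  shows "1 - p ^ Suc k \<noteq> 0"
  using assms[of "Suc k"] unfolding qpoch_Suc by simp

lemma pascal_alg0:
  fixes A B C v w1 w2 :: complex
  assumes "B \<noteq> 0" "C \<noteq> 0" "w1 \<noteq> 0" "w2 \<noteq> 0"
  shows "A * (w2 + v * w1) / (B * w1 * (C * w2)) = A / (B * w1 * C) + v * (A / (B * (C * w2)))"
  using assms by (simp add: field_simps)

lemma pascal_alg:
  fixes A B C u v :: complex
  assumes "B \<noteq> 0" "C \<noteq> 0" "1 - u \<noteq> 0" "1 - v \<noteq> 0"
  shows "A * (1 - v * u) / (B * (1 - u) * (C * (1 - v))) = A / (B * (1 - u) * C) + v * (A / (B * (C * (1 - v))))"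
proof -
  have e: "1 - v * u = (1 - v) + v * (1 - u)" by (simp add: algebra_simps)
  show ?thesis unfolding e by (rule pascal_alg0[OF assms])
qed

lemma qbin_pascal:
  assumes nz: "\<And>k. qpoch p k \<noteq> 0"
  shows "qbin p (Suc N) (Suc j) = qbin p N (Suc j) + p ^ (N - j) * qbin p N j"
proof (cases "j \<le> N")
  case False thus ?thesis by simp
next
  case True
  then obtain s where N: "N = j + s" using le_Suc_ex by blast
  show ?thesis
  proof (cases s)
    case 0
    thus ?thesis using N nz by simp
  next
    case (Suc s')
    have f1: "1 - p ^ Suc j \<noteq> 0" "1 - p ^ Suc s' \<noteq> 0" using qpoch_factor_nz[OF nz] by auto
    have e1: "qbin p (Suc N) (Suc j) = qpoch p (j+s) * (1 - p ^ Suc (j+s)) / (qpoch p j * (1 - p ^ Suc j) * (qpoch p s' * (1 - p ^ Suc s')))"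
      unfolding qbin_def N Suc by (simp add: qpoch_Suc)
    have e2: "qbin p N (Suc j) = qpoch p (j+s) / (qpoch p j * (1 - p ^ Suc j) * qpoch p s')"
      unfolding qbin_def N Suc by (simp add: qpoch_Suc)
    have e3: "qbin p N j = qpoch p (j+s) / (qpoch p j * (qpoch p s' * (1 - p ^ Suc s')))"
      unfolding qbin_def N Suc by (simp add: qpoch_Suc)
    have pw: "p ^ Suc (j + s) = p ^ Suc s' * p ^ Suc j" unfolding Suc by (simp add: power_add[symmetric] add.commute[of j s'])
    have ns: "N - j = Suc s'" using N Suc by simp
    show ?thesis unfolding e1 e2 e3 ns pw
      by (rule pascal_alg) (use nz[of j] nz[of s'] f1 in auto)
  qed
qed

lemma tri_Suc: "Suc j * (Suc j - 1) div 2 = j * (j - 1) div 2 + j"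
proof -
  have "Suc j * j = j * (j - 1) + 2 * j" by (cases j) (auto simp: algebra_simps)
  moreover have "even (j * (j - 1))" by (cases j) auto
  ultimately show ?thesis by auto
qed

lemma qbinomial:
  assumes nz: "\<And>k. qpoch p k \<noteq> 0"
  shows "(\<Prod>k<N. 1 + y * p ^ k) = (\<Sum>i\<le>N. qbin p N i * p ^ (i * (i - 1) div 2) * y ^ i)"
proof (induction N)
  case 0 thus ?case using nz by simp
next
  case (Suc N)
  let ?c = "\<lambda>i. qbin p N i * p ^ (i * (i - 1) div 2) * y ^ i"
  have "(\<Prod>k<Suc N. 1 + y * p ^ k) = (\<Sum>i\<le>N. ?c i) * (1 + y * p ^ N)"
    using Suc.IH by simp
  also have "\<dots> = (\<Sum>i\<le>N. ?c i) + (\<Sum>i\<le>N. ?c i) * (y * p ^ N)"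
    by (simp add: distrib_left)
  also have "(\<Sum>i\<le>N. ?c i) * (y * p ^ N) = (\<Sum>i\<le>N. ?c i * y * p ^ N)"
    by (simp add: sum_distrib_right mult.assoc)
  also have "(\<Sum>i\<le>N. ?c i) = ?c 0 + (\<Sum>j\<le>N. qbin p N (Suc j) * p ^ (Suc j * (Suc j - 1) div 2) * y ^ Suc j)"
  proof -
    have "(\<Sum>i\<le>Suc N. ?c i) = ?c 0 + (\<Sum>j\<le>N. ?c (Suc j))" by (rule sum.atMost_Suc_shift)
    moreover have "(\<Sum>i\<le>Suc N. ?c i) = (\<Sum>i\<le>N. ?c i)" by simp
    ultimately show ?thesis by simp
  qed
  also have "(\<Sum>i\<le>N. ?c i * y * p ^ N) = (\<Sum>j\<le>N. p ^ (N - j) * qbin p N j * p ^ (Suc j * (Suc j - 1) div 2) * y ^ Suc j)"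
  proof (rule sum.cong[OF refl])
    fix j assume "j \<in> {..N}"
    hence "N - j + (j * (j - 1) div 2 + j) = j * (j - 1) div 2 + N" by simp
    hence "p ^ (N - j) * p ^ (Suc j * (Suc j - 1) div 2) = p ^ (j * (j - 1) div 2) * p ^ N"
      unfolding tri_Suc power_add[symmetric] by (simp add: add.commute)
    thus "?c j * y * p ^ N = p ^ (N - j) * qbin p N j * p ^ (Suc j * (Suc j - 1) div 2) * y ^ Suc j"
      by (simp add: algebra_simps)
  qed
  also have "?c 0 + (\<Sum>j\<le>N. qbin p N (Suc j) * p ^ (Suc j * (Suc j - 1) div 2) * y ^ Suc j) +
       (\<Sum>j\<le>N. p ^ (N - j) * qbin p N j * p ^ (Suc j * (Suc j - 1) div 2) * y ^ Suc j)
     = qbin p (Suc N) 0 * p ^ (0 * (0 - 1) div 2) * y ^ 0 +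
       (\<Sum>j\<le>N. qbin p (Suc N) (Suc j) * p ^ (Suc j * (Suc j - 1) div 2) * y ^ Suc j)"
    by (simp add: qbin_pascal[OF nz] sum.distrib[symmetric] algebra_simps nz)
  also have "\<dots> = (\<Sum>i\<le>Suc N. qbin p (Suc N) i * p ^ (i * (i - 1) div 2) * y ^ i)"
    by (rule sum.atMost_Suc_shift[symmetric])
  finally show ?case .
qed

lemma tri_double: "of_nat (i * (i - 1) div 2) * (2::complex) = of_nat i * (of_nat i - 1)"
proof -
  have ev: "even (i * (i - 1))" by (cases i) auto
  have "of_nat (i * (i - 1) div 2) * (2::complex) = of_nat (i * (i - 1))"
    using ev by (metis dvd_mult_div_cancel mult.commute of_nat_mult of_nat_numeral)
  also have "\<dots> = of_nat i * (of_nat i - 1)" by (cases i) (auto simp: algebra_simps)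
  finally show ?thesis .
qed

lemma sum_odd: "(\<Sum>k<n. (2 * of_nat k + 1 :: complex)) = of_nat n ^ 2"
  by (induction n) (auto simp: power2_eq_square algebra_simps)

lemma JTP_fin:
  fixes Q X :: complex
  defines "p \<equiv> exp (2 * Q)"
  assumes nz: "\<And>k. qpoch p k \<noteq> 0"
  shows "(\<Prod>k<n. (1 + exp (X + (2 * of_nat k + 1) * Q)) * (1 + exp (- X + (2 * of_nat k + 1) * Q))) =
         (\<Sum>i\<le>2*n. qbin p (2*n) i * exp (of_int (int n - int i) * X + (of_int (int n - int i))^2 * Q))"
proof -
  define y where "y = exp (- X - (2 * of_nat n - 1) * Q)"
  have pk: "p ^ k = exp (of_nat k * (2 * Q))" for k unfolding p_def by (simp add: exp_of_nat_mult)
  have yp: "y * p ^ k = exp (- X + (2 * of_nat k + 1 - 2 * of_nat n) * Q)" for k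
    unfolding y_def pk exp_add[symmetric] by (rule arg_cong[where f=exp]) (simp add: algebra_simps)
  have qb: "(\<Prod>k<2*n. 1 + y * p ^ k) = (\<Sum>i\<le>2*n. qbin p (2*n) i * p ^ (i * (i - 1) div 2) * y ^ i)"
    by (rule qbinomial[OF nz])
  have rhs: "p ^ (i * (i - 1) div 2) * y ^ i = exp (- of_nat i * X + (of_nat i ^ 2 - 2 * of_nat n * of_nat i) * Q)" for i
  proof -
    have "p ^ (i * (i - 1) div 2) * y ^ i = exp (of_nat (i * (i - 1) div 2) * (2 * Q) + of_nat i * (- X - (2 * of_nat n - 1) * Q))"
      unfolding pk y_def exp_of_nat_mult[symmetric] exp_add ..
    also have "of_nat (i * (i - 1) div 2) * (2 * Q) = of_nat i * (of_nat i - 1) * Q"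
      using tri_double[of i] by (simp add: mult.assoc[symmetric])
    finally show ?thesis by (simp add: algebra_simps power2_eq_square)
  qed
  define F where "F k = 1 + y * p ^ k" for k
  have split: "(\<Prod>k<2*n. F k) = (\<Prod>k<n. F k) * (\<Prod>k<n. F (k + n))"
  proof -
    have "(\<Prod>k<2*n. F k) = prod F {0..<n} * prod F {n..<2*n}"
      using prod.atLeastLessThan_concat[of 0 n "2*n" F] by (simp add: atLeast0LessThan)
    also have "prod F {n..<2*n} = prod (\<lambda>k. F (k + n)) {0..<n}"
      using prod.shift_bounds_nat_ivl[of F 0 n n] by (simp add: mult_2)
    finally show ?thesis by (simp add: atLeast0LessThan)
  qed
  have hi: "F (k + n) = 1 + exp (- X + (2 * of_nat k + 1) * Q)" for k
    unfolding F_def yp by (simp add: algebra_simps)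
  have lo: "(\<Prod>k<n. F k) = (\<Prod>k<n. F (n - Suc k))"
    using prod.atLeastLessThan_rev[of F 0 n] by (simp add: atLeast0LessThan)
  have lo2: "F (n - Suc k) = exp (- X - (2 * of_nat k + 1) * Q) * (1 + exp (X + (2 * of_nat k + 1) * Q))" if "k < n" for k
  proof -
    have "F (n - Suc k) = 1 + exp (- X - (2 * of_nat k + 1) * Q)"
      unfolding F_def yp using that by (intro arg_cong[where f="\<lambda>z. 1 + exp z"]) (simp add: of_nat_diff algebra_simps)
    also have "\<dots> = exp (- X - (2 * of_nat k + 1) * Q) * (1 + exp (X + (2 * of_nat k + 1) * Q))"
      by (simp add: distrib_left exp_add[symmetric])
    finally show ?thesis .
  qed
  have lo3: "(\<Prod>k<n. F k) = exp (- of_nat n * X - of_nat n ^ 2 * Q) * (\<Prod>k<n. 1 + exp (X + (2 * of_nat k + 1) * Q))"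
  proof -
    have "(\<Prod>k<n. F k) = (\<Prod>k<n. exp (- X - (2 * of_nat k + 1) * Q) * (1 + exp (X + (2 * of_nat k + 1) * Q)))"
      unfolding lo by (rule prod.cong) (auto simp: lo2)
    also have "\<dots> = (\<Prod>k<n. exp (- X - (2 * of_nat k + 1) * Q)) * (\<Prod>k<n. 1 + exp (X + (2 * of_nat k + 1) * Q))"
      by (rule prod.distrib)
    also have "(\<Prod>k<n. exp (- X - (2 * of_nat k + 1) * Q)) = exp (\<Sum>k<n. - X - (2 * of_nat k + 1) * Q)"
      by (rule exp_sum[symmetric]) simp
    also have "(\<Sum>k<n. - X - (2 * of_nat k + 1) * Q) = - of_nat n * X - (\<Sum>k<n. (2 * of_nat k + 1)) * Q"
      by (simp add: sum_subtractf sum_distrib_right)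
    finally show ?thesis unfolding sum_odd .
  qed
  have L: "(\<Prod>k<2*n. 1 + y * p ^ k) = exp (- of_nat n * X - of_nat n ^ 2 * Q) *
      (\<Prod>k<n. (1 + exp (X + (2 * of_nat k + 1) * Q)) * (1 + exp (- X + (2 * of_nat k + 1) * Q)))"
    using split unfolding F_def[symmetric] lo3 hi prod.distrib by (simp add: mult.assoc)
  have "(\<Prod>k<n. (1 + exp (X + (2 * of_nat k + 1) * Q)) * (1 + exp (- X + (2 * of_nat k + 1) * Q)))
      = exp (of_nat n * X + of_nat n ^ 2 * Q) * (\<Prod>k<2*n. 1 + y * p ^ k)"
    unfolding L by (simp add: mult.assoc[symmetric] exp_add[symmetric])
  also have "\<dots> = (\<Sum>i\<le>2*n. qbin p (2*n) i * (exp (of_nat n * X + of_nat n ^ 2 * Q) * exp (- of_nat i * X + (of_nat i ^ 2 - 2 * of_nat n * of_nat i) * Q)))"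
    unfolding qb sum_distrib_left by (rule sum.cong[OF refl]) (subst rhs[symmetric], simp only: mult_ac)
  also have "\<dots> = (\<Sum>i\<le>2*n. qbin p (2*n) i * exp (of_int (int n - int i) * X + (of_int (int n - int i))^2 * Q))"
    by (rule sum.cong) (auto simp: exp_add[symmetric] power2_eq_square algebra_simps)
  finally show ?thesis .
qed


lemma qpoch_nz:
  assumes "norm p < 1" shows "qpoch p k \<noteq> 0"
proof -
  have "1 - p ^ Suc i \<noteq> 0" for i
  proof
    assume "1 - p ^ Suc i = 0"
    hence "norm (p ^ Suc i) = 1" by (metis eq_iff_diff_eq_0 norm_one)
    have h1: "norm p ^ i \<le> 1" using assms by (intro power_le_one) auto
    have "norm p * norm p ^ i \<le> norm p * 1" by (rule mult_left_mono[OF h1]) simp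
    hence "norm p ^ Suc i < 1" using assms by simp
    hence "norm (p ^ Suc i) < 1" unfolding norm_power .
    moreover note \<open>norm (p ^ Suc i) = 1\<close>
    ultimately show False by simp
  qed
  thus ?thesis unfolding qpoch_def by (simp add: prod_zero_iff)
qed

lemma qpoch_lim:
  assumes "norm p < 1"
  obtains P where "P \<noteq> 0" "qpoch p \<longlonglongrightarrow> P"
proof -
  define f where "f i = 1 - p ^ Suc i" for i
  have "summable (\<lambda>i. norm p ^ Suc i)"
    using assms by simp
  moreover have "norm (f i - 1) = norm p ^ Suc i" for i unfolding f_def by (simp add: norm_power del: power_Suc)
  ultimately have "summable (\<lambda>i. norm (f i - 1))" by simp
  hence cp: "convergent_prod f"
    by (intro abs_convergent_prod_imp_convergent_prod summable_imp_abs_convergent_prod)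
  have nz: "f i \<noteq> 0" for i using qpoch_nz[OF assms, of "Suc i"] unfolding qpoch_Suc f_def by simp
  have "(\<lambda>n. \<Prod>i\<le>n. f i) \<longlonglongrightarrow> prodinf f" by (rule convergent_prod_LIMSEQ[OF cp])
  moreover have "(\<Prod>i\<le>n. f i) = qpoch p (n + 1)" for n
    unfolding qpoch_def f_def by (simp add: lessThan_Suc_atMost)
  ultimately have "(\<lambda>n. qpoch p (n + 1)) \<longlonglongrightarrow> prodinf f" by simp
  hence "qpoch p \<longlonglongrightarrow> prodinf f" by (rule LIMSEQ_offset)
  moreover have "prodinf f \<noteq> 0" by (rule prodinf_nonzero[OF cp nz])
  ultimately show ?thesis using that by blast
qed

lemma qbin_bounded:
  assumes "norm p < 1"
  obtains M where "\<And>N i. norm (qbin p N i) \<le> M"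
proof -
  obtain P where P: "P \<noteq> 0" "qpoch p \<longlonglongrightarrow> P" using qpoch_lim[OF assms] by blast
  have "Bseq (qpoch p)" using P(2) convergent_imp_Bseq convergentI by blast
  then obtain U where U: "U > 0" "\<And>k. norm (qpoch p k) \<le> U" by (auto elim: BseqE)
  have "(\<lambda>k. inverse (qpoch p k)) \<longlonglongrightarrow> inverse P" using P by (intro tendsto_inverse) auto
  hence "Bseq (\<lambda>k. inverse (qpoch p k))" using convergent_imp_Bseq convergentI by blast
  then obtain V where V: "V > 0" "\<And>k. norm (inverse (qpoch p k)) \<le> V" by (auto elim: BseqE)
  have "norm (qbin p N i) \<le> U * V * V" for N i
  proof (cases "i \<le> N")
    case True
    have "norm (qbin p N i) = norm (qpoch p N) * norm (inverse (qpoch p i)) * norm (inverse (qpoch p (N - i)))"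
      using True by (simp add: qbin_def norm_divide norm_mult divide_inverse norm_inverse)
    also have "\<dots> \<le> U * V * V"
      using U(1) V(1) by (intro mult_mono U V) auto
    finally show ?thesis .
  next
    case False thus ?thesis using U V by simp
  qed
  thus ?thesis using that by blast
qed

lemma qbin_lim1:
  assumes "norm p < 1" "qpoch p \<longlonglongrightarrow> P" "P \<noteq> 0"
  shows "(\<lambda>n. qbin p (2*n) (n - j)) \<longlonglongrightarrow> inverse P"
proof -
  have l1: "(\<lambda>n. qpoch p (2*n)) \<longlonglongrightarrow> P"
    by (rule filterlim_compose[OF assms(2)]) (simp add: filterlim_subseq strict_mono_def)
  have l2: "(\<lambda>n. qpoch p (n - j)) \<longlonglongrightarrow> P"
    by (rule filterlim_compose[OF assms(2) filterlim_minus_const_nat_at_top])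
  have l3: "(\<lambda>n. qpoch p (n + j)) \<longlonglongrightarrow> P" by (rule LIMSEQ_ignore_initial_segment[OF assms(2)])
  have "(\<lambda>n. qpoch p (2*n) / (qpoch p (n - j) * qpoch p (n + j))) \<longlonglongrightarrow> P / (P * P)"
    by (rule tendsto_divide[OF l1 tendsto_mult[OF l2 l3]]) (use assms in simp)
  moreover have "P / (P * P) = inverse P" using assms by (simp add: field_simps)
  ultimately have lim: "(\<lambda>n. qpoch p (2*n) / (qpoch p (n - j) * qpoch p (n + j))) \<longlonglongrightarrow> inverse P" by simp
  have "eventually (\<lambda>n. qpoch p (2*n) / (qpoch p (n - j) * qpoch p (n + j)) = qbin p (2*n) (n - j)) sequentially"
    by (rule eventually_sequentiallyI[of j]) (simp add: qbin_def)
  thus ?thesis by (rule Lim_transform_eventually[OF lim])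
qed

lemma qbin_lim2:
  assumes "norm p < 1" "qpoch p \<longlonglongrightarrow> P" "P \<noteq> 0"
  shows "(\<lambda>n. qbin p (2*n) (n + j + 1)) \<longlonglongrightarrow> inverse P"
proof -
  have l1: "(\<lambda>n. qpoch p (2*n)) \<longlonglongrightarrow> P"
    by (rule filterlim_compose[OF assms(2)]) (simp add: filterlim_subseq strict_mono_def)
  have l2: "(\<lambda>n. qpoch p (n - (j + 1))) \<longlonglongrightarrow> P"
    by (rule filterlim_compose[OF assms(2) filterlim_minus_const_nat_at_top])
  have l3: "(\<lambda>n. qpoch p (n + (j + 1))) \<longlonglongrightarrow> P" by (rule LIMSEQ_ignore_initial_segment[OF assms(2)])
  have "(\<lambda>n. qpoch p (2*n) / (qpoch p (n + (j + 1)) * qpoch p (n - (j + 1)))) \<longlonglongrightarrow> P / (P * P)"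
    by (rule tendsto_divide[OF l1 tendsto_mult[OF l3 l2]]) (use assms in simp)
  moreover have "P / (P * P) = inverse P" using assms by (simp add: field_simps)
  ultimately have lim: "(\<lambda>n. qpoch p (2*n) / (qpoch p (n + (j + 1)) * qpoch p (n - (j + 1)))) \<longlonglongrightarrow> inverse P" by simp
  have ev: "eventually (\<lambda>n. qpoch p (2*n) / (qpoch p (n + (j + 1)) * qpoch p (n - (j + 1))) = qbin p (2*n) (n + j + 1)) sequentially"
  proof (rule eventually_sequentiallyI[of "j + 1"])
    fix n assume "j + 1 \<le> n"
    hence "2 * n - (n + j + 1) = n - (j + 1)" by simp
    thus "qpoch p (2*n) / (qpoch p (n + (j + 1)) * qpoch p (n - (j + 1))) = qbin p (2*n) (n + j + 1)"
      using \<open>j + 1 \<le> n\<close> by (simp add: qbin_def add.assoc)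
  qed
  thus ?thesis by (rule Lim_transform_eventually[OF lim])
qed


lemma sum_split_2n:
  fixes F :: "nat \<Rightarrow> complex"
  shows "(\<Sum>i\<le>2*n. F i) = (\<Sum>j\<le>n. F (n - j)) + (\<Sum>j<n. F (n + j + 1))"
proof -
  have "(\<Sum>i\<le>2*n. F i) = (\<Sum>i\<in>{..n}. F i) + (\<Sum>i\<in>{n+1..2*n}. F i)"
  proof -
    have "{..2*n} = {..n} \<union> {n+1..2*n}" by auto
    moreover have "{..n} \<inter> {n+1..2*n} = {}" by auto
    ultimately show ?thesis by (simp add: sum.union_disjoint)
  qed
  also have "(\<Sum>i\<in>{..n}. F i) = (\<Sum>j\<le>n. F (n - j))"
    by (rule sum.reindex_bij_witness[where i="\<lambda>i. n - i" and j="\<lambda>i. n - i"]) auto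
  also have "(\<Sum>i\<in>{n+1..2*n}. F i) = (\<Sum>j<n. F (n + j + 1))"
    by (rule sum.reindex_bij_witness[where i="\<lambda>j. n + j + 1" and j="\<lambda>i. i - n - 1"]) auto
  finally show ?thesis .
qed

lemma tannery_part:
  fixes Q X P :: complex
  defines "p \<equiv> exp (2 * Q)"
  defines "e \<equiv> \<lambda>j::int. exp (of_int j * X + (of_int j)^2 * Q)"
  assumes p1: "norm p < 1" and P: "qpoch p \<longlonglongrightarrow> P" "P \<noteq> 0"
    and s1: "summable (\<lambda>j. norm (e (int j)))" and s2: "summable (\<lambda>j. norm (e (- int j - 1)))"
  shows "(\<lambda>n. \<Prod>k<n. (1 + exp (X + (2 * of_nat k + 1) * Q)) * (1 + exp (- X + (2 * of_nat k + 1) * Q)))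
           \<longlonglongrightarrow> inverse P * ((\<Sum>j. e (int j)) + (\<Sum>j. e (- int j - 1)))"
proof -
  obtain M where M: "\<And>N i. norm (qbin p N i) \<le> M" using qbin_bounded[OF p1] by blast
  have M0: "0 \<le> M" using M[of 0 0] norm_ge_zero order_trans by blast
  define a where "a j n = (if j \<le> n then qbin p (2*n) (n - j) * e (int j) else 0)" for j n
  define c where "c j n = (if j < n then qbin p (2*n) (n + j + 1) * e (- int j - 1) else 0)" for j n
  have G: "(\<Prod>k<n. (1 + exp (X + (2 * of_nat k + 1) * Q)) * (1 + exp (- X + (2 * of_nat k + 1) * Q)))
      = (\<Sum>j. a j n) + (\<Sum>j. c j n)" for n
  proof -
    have "(\<Prod>k<n. (1 + exp (X + (2 * of_nat k + 1) * Q)) * (1 + exp (- X + (2 * of_nat k + 1) * Q)))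
        = (\<Sum>i\<le>2*n. qbin p (2*n) i * e (int n - int i))"
      unfolding e_def p_def by (rule JTP_fin) (use qpoch_nz[OF p1] in \<open>simp add: p_def\<close>)
    also have "\<dots> = (\<Sum>j\<le>n. qbin p (2*n) (n - j) * e (int n - int (n - j))) + (\<Sum>j<n. qbin p (2*n) (n + j + 1) * e (int n - int (n + j + 1)))"
      by (rule sum_split_2n)
    also have "(\<Sum>j\<le>n. qbin p (2*n) (n - j) * e (int n - int (n - j))) = (\<Sum>j\<le>n. a j n)"
      by (rule sum.cong) (auto simp: a_def of_nat_diff)
    also have "(\<Sum>j<n. qbin p (2*n) (n + j + 1) * e (int n - int (n + j + 1))) = (\<Sum>j<n. c j n)"
    proof (rule sum.cong[OF refl])
      fix j assume "j \<in> {..<n}"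
      hence hj: "int n - int (n + j + 1) = - int j - 1" "j < n" by auto
      show "qbin p (2*n) (n + j + 1) * e (int n - int (n + j + 1)) = c j n"
        unfolding hj(1) c_def using hj(2) by simp
    qed
    also have "(\<Sum>j\<le>n. a j n) = (\<Sum>j. a j n)"
      by (rule suminf_finite[symmetric]) (auto simp: a_def)
    also have "(\<Sum>j<n. c j n) = (\<Sum>j. c j n)"
      by (rule suminf_finite[symmetric]) (auto simp: c_def)
    finally show ?thesis .
  qed
  have ta: "(\<lambda>n. \<Sum>j. a j n) \<longlonglongrightarrow> (\<Sum>j. inverse P * e (int j))"
  proof -
    have "eventually (\<lambda>n. summable (\<lambda>k. norm (a k n))) sequentially \<and>
           summable (\<lambda>n. norm (inverse P * e (int n))) \<and>
           ((\<lambda>n. suminf (\<lambda>k. a k n)) \<longlongrightarrow> suminf (\<lambda>j. inverse P * e (int j))) sequentially"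
    proof (rule tannerys_theorem[where M="\<lambda>j. M * norm (e (int j))"])
      fix j
      have "(\<lambda>n. qbin p (2*n) (n - j) * e (int j)) \<longlonglongrightarrow> inverse P * e (int j)"
        by (intro tendsto_mult_right qbin_lim1[OF p1 P])
      moreover have "eventually (\<lambda>n. qbin p (2*n) (n - j) * e (int j) = a j n) sequentially"
        by (rule eventually_sequentiallyI[of j]) (simp add: a_def)
      ultimately show "(\<lambda>n. a j n) \<longlonglongrightarrow> inverse P * e (int j)" by (rule Lim_transform_eventually)
    next
      show "eventually (\<lambda>(k, n). norm (a k n) \<le> M * norm (e (int k))) (at_top \<times>\<^sub>F sequentially)"
        by (rule always_eventually) (auto simp: a_def norm_mult M0 intro: mult_right_mono M)
    next
      show "summable (\<lambda>j. M * norm (e (int j)))" by (rule summable_mult[OF s1])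
    qed simp
    thus ?thesis by blast
  qed
  have tc: "(\<lambda>n. \<Sum>j. c j n) \<longlonglongrightarrow> (\<Sum>j. inverse P * e (- int j - 1))"
  proof -
    have "eventually (\<lambda>n. summable (\<lambda>k. norm (c k n))) sequentially \<and>
           summable (\<lambda>n. norm (inverse P * e (- int n - 1))) \<and>
           ((\<lambda>n. suminf (\<lambda>k. c k n)) \<longlongrightarrow> suminf (\<lambda>j. inverse P * e (- int j - 1))) sequentially"
    proof (rule tannerys_theorem[where M="\<lambda>j. M * norm (e (- int j - 1))"])
      fix j
      have "(\<lambda>n. qbin p (2*n) (n + j + 1) * e (- int j - 1)) \<longlonglongrightarrow> inverse P * e (- int j - 1)"
        by (intro tendsto_mult_right qbin_lim2[OF p1 P])
      moreover have "eventually (\<lambda>n. qbin p (2*n) (n + j + 1) * e (- int j - 1) = c j n) sequentially"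
        by (rule eventually_sequentiallyI[of "j + 1"]) (simp add: c_def)
      ultimately show "(\<lambda>n. c j n) \<longlonglongrightarrow> inverse P * e (- int j - 1)" by (rule Lim_transform_eventually)
    next
      show "eventually (\<lambda>(k, n). norm (c k n) \<le> M * norm (e (- int k - 1))) (at_top \<times>\<^sub>F sequentially)"
        by (rule always_eventually) (auto simp: c_def norm_mult M0 intro: mult_right_mono M)
    next
      show "summable (\<lambda>j. M * norm (e (- int j - 1)))" by (rule summable_mult[OF s2])
    qed simp
    thus ?thesis by blast
  qed
  have "(\<Sum>j. inverse P * e (int j)) = inverse P * (\<Sum>j. e (int j))"
    by (rule suminf_mult[OF summable_norm_cancel[OF s1]])
  moreover have "(\<Sum>j. inverse P * e (- int j - 1)) = inverse P * (\<Sum>j. e (- int j - 1))"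
    by (rule suminf_mult[OF summable_norm_cancel[OF s2]])
  ultimately have "(\<lambda>n. (\<Sum>j. a j n) + (\<Sum>j. c j n)) \<longlonglongrightarrow> inverse P * ((\<Sum>j. e (int j)) + (\<Sum>j. e (- int j - 1)))"
    using tendsto_add[OF ta tc] by (simp add: distrib_left)
  thus ?thesis unfolding G .
qed


lemma norm_exp_lin: "norm (exp (Y + (2 * of_nat k + 1) * Q)) = exp (Re Y + Re Q) * exp (2 * Re Q) ^ k"
proof -
  have "norm (exp (Y + (2 * of_nat k + 1) * Q)) = exp (Re Y + (2 * real k + 1) * Re Q)"
    by (simp add: norm_exp_eq_Re)
  also have "\<dots> = exp (Re Y + Re Q + real k * (2 * Re Q))" by (simp add: algebra_simps)
  also have "\<dots> = exp (Re Y + Re Q) * exp (2 * Re Q) ^ k" by (simp add: exp_add exp_of_nat_mult)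
  finally show ?thesis .
qed

lemma one_plus_exp_nz:
  assumes "Re z \<noteq> 0" shows "1 + exp z \<noteq> 0"
proof
  assume "1 + exp z = 0"
  hence "exp z = -1" by (simp add: add_eq_0_iff)
  hence "norm (exp z) = 1" by simp
  hence "exp (Re z) = 1" by (simp add: norm_exp_eq_Re)
  thus False using assms by simp
qed

lemma prod_lim_nz:
  fixes Q X :: complex
  assumes Q: "Re Q < 0"
    and c1: "\<And>k::nat. Re X + (2 * real k + 1) * Re Q \<noteq> 0"
    and c2: "\<And>k::nat. - Re X + (2 * real k + 1) * Re Q \<noteq> 0"
  obtains Gi where "Gi \<noteq> 0"
    "(\<lambda>n. \<Prod>k<n. (1 + exp (X + (2 * of_nat k + 1) * Q)) * (1 + exp (- X + (2 * of_nat k + 1) * Q))) \<longlonglongrightarrow> Gi"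
proof -
  define u where "u k = exp (X + (2 * of_nat k + 1) * Q)" for k :: nat
  define v where "v k = exp (- X + (2 * of_nat k + 1) * Q)" for k :: nat
  define g where "g k = (1 + u k) * (1 + v k)" for k
  define r where "r = exp (2 * Re Q)"
  have r: "0 \<le> r" "r < 1" unfolding r_def using Q by auto
  have nu: "norm (u k) = exp (Re X + Re Q) * r ^ k" for k unfolding u_def r_def by (rule norm_exp_lin)
  have nv: "norm (v k) = exp (- Re X + Re Q) * r ^ k" for k unfolding v_def r_def using norm_exp_lin[of "- X" k Q] by simp
  have gnz: "g k \<noteq> 0" for k
  proof -
    have "1 + u k \<noteq> 0" unfolding u_def by (rule one_plus_exp_nz) (use c1[of k] in simp)
    moreover have "1 + v k \<noteq> 0" unfolding v_def by (rule one_plus_exp_nz) (use c2[of k] in simp)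
    ultimately show ?thesis unfolding g_def by simp
  qed
  have bnd: "norm (g k - 1) \<le> (exp (Re X + Re Q) + exp (- Re X + Re Q) + exp (Re X + Re Q) * exp (- Re X + Re Q)) * r ^ k" for k
  proof -
    have "g k - 1 = u k + v k + u k * v k" unfolding g_def by (simp add: algebra_simps)
    hence "norm (g k - 1) \<le> norm (u k) + norm (v k) + norm (u k) * norm (v k)"
      by (metis norm_mult norm_triangle_le order_refl add_mono)
    also have "\<dots> = exp (Re X + Re Q) * r ^ k + exp (- Re X + Re Q) * r ^ k + exp (Re X + Re Q) * exp (- Re X + Re Q) * (r ^ k * r ^ k)"
      unfolding nu nv by (simp add: algebra_simps)
    also have "\<dots> \<le> exp (Re X + Re Q) * r ^ k + exp (- Re X + Re Q) * r ^ k + exp (Re X + Re Q) * exp (- Re X + Re Q) * r ^ k"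
    proof -
      have "r ^ k * r ^ k \<le> r ^ k" using r by (intro mult_left_le power_le_one) auto
      thus ?thesis by (intro add_left_mono mult_left_mono) auto
    qed
    finally show ?thesis by (simp add: algebra_simps)
  qed
  have "summable (\<lambda>k. (exp (Re X + Re Q) + exp (- Re X + Re Q) + exp (Re X + Re Q) * exp (- Re X + Re Q)) * r ^ k)"
    using r by (intro summable_mult summable_geometric) auto
  hence "summable (\<lambda>k. norm (g k - 1))"
    by (rule summable_comparison_test'[where N=0]) (use bnd in auto)
  hence cp: "convergent_prod g"
    by (intro abs_convergent_prod_imp_convergent_prod summable_imp_abs_convergent_prod)
  have "(\<lambda>n. \<Prod>i\<le>n. g i) \<longlonglongrightarrow> prodinf g" by (rule convergent_prod_LIMSEQ[OF cp])
  moreover have "(\<Prod>i\<le>n. g i) = (\<Prod>i<n + 1. g i)" for n by (simp add: lessThan_Suc_atMost)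
  ultimately have "(\<lambda>n. \<Prod>i<n + 1. g i) \<longlonglongrightarrow> prodinf g" by simp
  hence "(\<lambda>n. \<Prod>i<n. g i) \<longlonglongrightarrow> prodinf g" by (rule LIMSEQ_offset)
  moreover have "prodinf g \<noteq> 0" by (rule prodinf_nonzero[OF cp gnz])
  ultimately show ?thesis using that unfolding g_def u_def v_def by blast
qed


lemma th_nonzero:
  fixes a b :: real and t :: complex
  assumes t: "Im t > 0" and a: "0 < a" "a < 1/2"
  shows "th t a b \<noteq> 0"
proof -
  define Q :: complex where "Q = complex_of_real pi * \<i> * t"
  define X :: complex where "X = 2 * complex_of_real pi * \<i> * (complex_of_real a * t + complex_of_real b)"
  define e where "e = (\<lambda>j::int. exp (of_int j * X + (of_int j)^2 * Q))"
  define C0 :: complex where "C0 = exp (2 * complex_of_real pi * \<i> * ((1/2) * complex_of_real a ^ 2 * t + complex_of_real a * complex_of_real b))"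
  define p :: complex where "p = exp (2 * Q)"
  have ReQ: "Re Q = - pi * Im t" unfolding Q_def by simp
  have ReX: "Re X = - 2 * pi * a * Im t" unfolding X_def by simp
  have Q0: "Re Q < 0" using t unfolding ReQ by simp
  have tm_e: "tm t a b n = C0 * e n" for n
    unfolding tm_def C0_def e_def Q_def X_def exp_add[symmetric]
    by (rule arg_cong[where f=exp]) (simp add: power2_eq_square algebra_simps)
  have C0nz: "C0 \<noteq> 0" unfolding C0_def by simp
  have e_tm: "e n = tm t a b n / C0" for n using tm_e C0nz by simp
  have p1: "norm p < 1" unfolding p_def using Q0 by (simp add: norm_exp_eq_Re)
  obtain P where P: "P \<noteq> 0" "qpoch p \<longlonglongrightarrow> P" using qpoch_lim[OF p1] by blast
  have s1: "summable (\<lambda>j. norm (e (int j)))"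
    unfolding e_tm norm_divide by (rule summable_divide[OF tm_summable_parts(1)[OF t]])
  have s2: "summable (\<lambda>j. norm (e (- int j - 1)))"
    unfolding e_tm norm_divide by (rule summable_divide[OF tm_summable_parts(2)[OF t]])
  have lim1: "(\<lambda>n. \<Prod>k<n. (1 + exp (X + (2 * of_nat k + 1) * Q)) * (1 + exp (- X + (2 * of_nat k + 1) * Q)))
           \<longlonglongrightarrow> inverse P * ((\<Sum>j. e (int j)) + (\<Sum>j. e (- int j - 1)))"
    unfolding e_def by (rule tannery_part) (use p1 s1 s2 P in \<open>simp_all add: p_def e_def\<close>)
  obtain Gi where Gi: "Gi \<noteq> 0"
    "(\<lambda>n. \<Prod>k<n. (1 + exp (X + (2 * of_nat k + 1) * Q)) * (1 + exp (- X + (2 * of_nat k + 1) * Q))) \<longlonglongrightarrow> Gi"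
  proof (rule prod_lim_nz[OF Q0])
    fix k :: nat
    have "2 * real k + 1 + 2 * a > 0" using a by simp
    hence "pi * Im t * (2 * real k + 1 + 2 * a) > 0" using t by simp
    thus "Re X + (2 * real k + 1) * Re Q \<noteq> 0" unfolding ReX ReQ by (simp add: algebra_simps)
    have "2 * real k + 1 - 2 * a > 0" using a by simp
    hence "pi * Im t * (2 * real k + 1 - 2 * a) > 0" using t by simp
    thus "- Re X + (2 * real k + 1) * Re Q \<noteq> 0" unfolding ReX ReQ by (simp add: algebra_simps)
  qed
  have eq: "inverse P * ((\<Sum>j. e (int j)) + (\<Sum>j. e (- int j - 1))) = Gi"
    using LIMSEQ_unique[OF lim1 Gi(2)] .
  hence Snz: "(\<Sum>j. e (int j)) + (\<Sum>j. e (- int j - 1)) \<noteq> 0" using Gi(1) by auto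
  have hs: "(e has_sum ((\<Sum>j. e (int j)) + (\<Sum>j. e (- int j - 1)))) UNIV"
    by (rule int_has_sum_split[OF s1 s2])
  have "th t a b = (\<Sum>\<^sub>\<infinity>n. C0 * e n)" unfolding th_def tm_e ..
  also have "\<dots> = C0 * (\<Sum>\<^sub>\<infinity>n. e n)" by (rule infsum_cmult_right')
  also have "(\<Sum>\<^sub>\<infinity>n. e n) = (\<Sum>j. e (int j)) + (\<Sum>j. e (- int j - 1))" by (rule infsumI[OF hs])
  finally show ?thesis using C0nz Snz by simp
qed


theorem theorem5p2:
  fixes tau :: complex
  assumes "Im tau > 0"
  defines "\<zeta> \<equiv> exp (2 * pi * \<i> / 5)"
  defines "c \<equiv> (\<lambda>k::nat. theta_const (1/5) (real k / 5) tau)"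
  defines "d \<equiv> (\<lambda>k::nat. theta_const (3/5) (real k / 5) tau)"
  shows "theta_const 1 (1/5) tau = \<zeta> * (\<zeta> * (c 9)^3 * d 5 + (c 3)^3 * d 1) / (d 3)^3 \<and>
         theta_const 1 (3/5) tau = (- ((d 7)^3 * c 5) + (d 9)^3 * c 7) / (c 1)^3"
proof -
  have c: "c k = th tau (1/10) (real k / 10)" for k unfolding c_def theta_const_th by simp
  have d: "d k = th tau (3/10) (real k / 10)" for k unfolding d_def theta_const_th by simp
  have z: "\<zeta> = exp (2 * pi * \<i> * complex_of_real (1/5))" unfolding \<zeta>_def by simp
  have z2: "\<zeta> * \<zeta> = exp (2 * pi * \<i> * complex_of_real (2/5))" unfolding z e_mult by simp
  have d3: "d 3 \<noteq> 0" unfolding d by (rule th_nonzero[OF assms(1)]) auto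
  have c1: "c 1 \<noteq> 0" unfolding c by (rule th_nonzero[OF assms(1)]) auto
  have t1: "theta_const 1 (1/5) tau = th tau (1/2) (1/10)" by (simp add: theta_const_th)
  have t2: "theta_const 1 (3/5) tau = th tau (1/2) (3/10)" by (simp add: theta_const_th)
  have c9: "c 9 = th tau (1/10) (9/10)" and c3: "c 3 = th tau (1/10) (3/10)" and c1': "c 1 = th tau (1/10) (1/10)"
    and c7: "c 7 = th tau (1/10) (7/10)" and c5: "c 5 = th tau (1/10) (1/2)" by (simp_all add: c)
  have d5: "d 5 = th tau (3/10) (1/2)" and d1: "d 1 = th tau (3/10) (1/10)" and d3': "d 3 = th tau (3/10) (3/10)"
    and d9: "d 9 = th tau (3/10) (9/10)" and d7: "d 7 = th tau (3/10) (7/10)" by (simp_all add: d)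
  have i1: "theta_const 1 (1/5) tau * (d 3)^3 = \<zeta> * \<zeta> * (c 9)^3 * d 5 + \<zeta> * d 1 * (c 3)^3"
    unfolding t1 c9 d5 d1 c3 d3' using ident1[OF assms(1), unfolded z2[symmetric] z[symmetric]] .
  have i2: "theta_const 1 (3/5) tau * (c 1)^3 = c 7 * (d 9)^3 - c 5 * (d 7)^3"
    unfolding t2 c1' c7 d9 c5 d7 by (rule ident2[OF assms(1)])
  show ?thesis
  proof
    show "theta_const 1 (1/5) tau = \<zeta> * (\<zeta> * (c 9)^3 * d 5 + (c 3)^3 * d 1) / (d 3)^3"
      using i1 d3 by (simp add: field_simps)
    show "theta_const 1 (3/5) tau = (- ((d 7)^3 * c 5) + (d 9)^3 * c 7) / (c 1)^3"
      using i2 c1 by (simp add: field_simps)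
  qed
qed

end
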